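(* Let $m\ge 1$ be an integer. For every integer $N\ge 0$ let $H_N=\det\left(\gamma^{(2m)}_{i+j-m}(t)\right)_{i,j=0}^{N-1}$ (with $H_0=1$). Then $$H_N=\begin{cases}1, & \text{if } N=0,\\ -\xi_1\, t^{m(n-1)(mn-2)/2}\,[n-1]_{t^m}, & \text{if } N=mn \text{ with } n\ge 1,\\ (-1)^m\xi_1\, t^{m^2n(n-1)/2}\,[n]_{t^m}, & \text{if } N=mn+1 \text{ with } n\ge 0,\\ 0, & \text{otherwise},\end{cases}$$ where $\xi_1=(-1)^{nm(m-1)/2}$.
   Context: The Narayana polynomials are $\gamma_n(t)=\sum_{k=0}^{n}\binom{n}{k}\binom{n-1}{k}\frac{1}{k+1}t^k$ (so $\gamma_0(t)=1$), with generating function $\gamma(t,q)=\sum_{n\ge0}\gamma_n(t)q^n$, which satisfies $-1+(1-q+tq)\gamma(t,q)-tq\,\gamma(t,q)^2=0$. Let $G(t,q)=(\gamma(t,q)-1)/q$. For $m\ge1$ the polynomials $\gamma^{(2m)}_n(t)$ are defined by $\sum_{n\ge0}\gamma^{(2m)}_n(t)q^n=G(t,q)^m$, and $\gamma^{(2m)}_i(t)=0$ for $i<0$. Equivalently, $\gamma^{(2m)}_{n-m}(t)$ is the coefficient of $q^n$ in $(\gamma(t,q)-1)^m$. The $q$-number is $[n]_x=1+x+\cdots+x^{n-1}$ (so $[0]_x=0$). *)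

theory Defs
  imports "HOL-Computational_Algebra.Formal_Power_Series" "HOL-Computational_Algebra.Polynomial"
    "Jordan_Normal_Form.Determinant"
begin

definition tvar :: "rat poly" where "tvar = [:0, 1:]"

text \<open>Narayana polynomial: sum over k=0..n of C(n,k) C(n-1,k)/(k+1) t^k.
  For n = 0 this gives 1 (nat subtraction 0-1 = 0 and C(0,0)=1, C(0,k)=0 for k>0).\<close>
definition narayana :: "nat \<Rightarrow> rat poly" where
  "narayana n = (\<Sum>k=0..n. smult (of_nat (n choose k) * of_nat ((n - 1) choose k) / of_nat (k + 1))
                               (tvar ^ k))"

definition gamma_fps :: "rat poly fps" where
  "gamma_fps = Abs_fps narayana"

definition G_fps :: "rat poly fps" where
  "G_fps = fps_shift 1 (gamma_fps - 1)"

definition gamma2m :: "nat \<Rightarrow> int \<Rightarrow> rat poly" where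
  "gamma2m m i = (if i < 0 then 0 else fps_nth (G_fps ^ m) (nat i))"

definition hankelH :: "nat \<Rightarrow> nat \<Rightarrow> rat poly" where
  "hankelH m N = det (mat N N (\<lambda>(i, j). gamma2m m (int i + int j - int m)))"

definition qnum :: "nat \<Rightarrow> 'a::comm_semiring_1 \<Rightarrow> 'a" where
  "qnum n x = (\<Sum>i<n. x ^ i)"

end

theory Submission
  imports Defs
begin


definition nc :: "nat \<Rightarrow> nat \<Rightarrow> rat" where
  "nc n k = of_nat (n choose k) * of_nat ((n - 1) choose k) / of_nat (k + 1)"

lemma tvar_pow: "tvar ^ k = monom 1 k"
  by (simp add: tvar_def monom_altdef)

lemma narayana_monom: "narayana n = (\<Sum>k=0..n. monom (nc n k) k)"
  unfolding narayana_def nc_def tvar_pow by (simp add: smult_monom)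

lemma nc_big: "n < k \<Longrightarrow> nc n k = 0"
  by (simp add: nc_def)

lemma coeff_narayana: "coeff (narayana n) k = nc n k"
proof (cases "k \<le> n")
  case True
  then show ?thesis unfolding narayana_monom coeff_sum coeff_monom
    by (simp add: sum.delta)
next
  case False
  then show ?thesis unfolding narayana_monom coeff_sum coeff_monom
    by (simp add: nc_big)
qed

lemma nc_R2: "nc (Suc n) (Suc k) * (of_nat (Suc k) * of_nat (Suc k + 1)) = of_nat (Suc n) * of_nat n * nc n k"
proof -
  have e1: "Suc k * (Suc n choose Suc k) = Suc n * (n choose k)" by (rule Suc_times_binomial)
  have e2: "Suc k * (n choose Suc k) = n * ((n - 1) choose k)" by (rule binomial_absorption)
  have e1': "of_nat (Suc k) * of_nat (Suc n choose Suc k) = (of_nat (Suc n) * of_nat (n choose k) :: rat)"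
    using e1 by (metis of_nat_mult)
  have e2': "of_nat (Suc k) * of_nat (n choose Suc k) = (of_nat n * of_nat ((n - 1) choose k) :: rat)"
    using e2 by (metis of_nat_mult)
  have "nc (Suc n) (Suc k) * (of_nat (Suc k) * of_nat (Suc k + 1)) * of_nat (Suc k)
      = (of_nat (Suc k) * of_nat (Suc n choose Suc k)) * (of_nat (Suc k) * of_nat (n choose Suc k))"
    unfolding nc_def by (simp add: field_simps)
  also have "\<dots> = of_nat (Suc n) * of_nat n * nc n k * of_nat (Suc k)"
    unfolding e1' e2' nc_def by (simp add: field_simps)
  finally show ?thesis by simp
qed

lemma nc_R3: "nc n (Suc k) * (of_nat (Suc k) * of_nat (Suc k + 1)) = of_nat (n - k) * of_nat (n - 1 - k) * nc n k"
proof -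
  have e1: "Suc k * (n choose Suc k) = (n - k) * (n choose k)"
    using binomial_absorption binomial_absorb_comp by metis
  have e2: "Suc k * ((n - 1) choose Suc k) = (n - 1 - k) * ((n - 1) choose k)"
    using binomial_absorption binomial_absorb_comp by metis
  have e1': "of_nat (Suc k) * of_nat (n choose Suc k) = (of_nat (n - k) * of_nat (n choose k) :: rat)"
    using e1 by (metis of_nat_mult)
  have e2': "of_nat (Suc k) * of_nat ((n - 1) choose Suc k) = (of_nat (n - 1 - k) * of_nat ((n - 1) choose k) :: rat)"
    using e2 by (metis of_nat_mult)
  have "nc n (Suc k) * (of_nat (Suc k) * of_nat (Suc k + 1)) * of_nat (Suc k)
     = (of_nat (Suc k) * of_nat (n choose Suc k)) * (of_nat (Suc k) * of_nat ((n - 1) choose Suc k))"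
    unfolding nc_def by (simp add: field_simps)
  also have "\<dots> = of_nat (n - k) * of_nat (n - 1 - k) * nc n k * of_nat (Suc k)"
    unfolding e1' e2' nc_def by (simp add: field_simps)
  finally show ?thesis by simp
qed

lemma nc_zero: "1 \<le> n \<Longrightarrow> n \<le> k \<Longrightarrow> nc n k = 0"
  unfolding nc_def by (subgoal_tac "n - 1 < k") auto

lemma nc_0: "1 \<le> n \<Longrightarrow> nc n 0 = 1"
  by (simp add: nc_def)

lemma nc_1: "nc n (Suc 0) = of_nat n * (of_nat n - 1) / 2"
  by (cases n) (simp_all add: nc_def)

lemma nc_rec_main:
  fixes i j :: nat
  shows "of_nat (i+j+4) * nc (i+j+3) (i+2) - of_nat (2*(i+j+3)-1) * (nc (i+j+2) (i+2) + nc (i+j+2) (i+1))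
     + of_nat (i+j+1) * (nc (i+j+1) (i+2) - 2 * nc (i+j+1) (i+1) + nc (i+j+1) i) = 0"
proof -
  define b where "b = nc (i+j+1) i"
  have h1: "nc (i+j+3) (i+2) * (of_nat (i+2) * of_nat (i+3)) = of_nat (i+j+3) * of_nat (i+j+2) * nc (i+j+2) (i+1)"
    using nc_R2[of "i+j+2" "i+1"] by (simp add: eval_nat_numeral ac_simps)
  have h2: "nc (i+j+2) (i+1) * (of_nat (i+1) * of_nat (i+2)) = of_nat (i+j+2) * of_nat (i+j+1) * b"
    using nc_R2[of "i+j+1" "i"] unfolding b_def by (simp add: eval_nat_numeral ac_simps)
  have h3: "nc (i+j+1) (i+1) * (of_nat (i+1) * of_nat (i+2)) = of_nat (j+1) * of_nat j * b"
    using nc_R3[of "i+j+1" "i"] unfolding b_def by (simp add: eval_nat_numeral ac_simps)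
  have h4: "nc (i+j+1) (i+2) * (of_nat (i+2) * of_nat (i+3)) = of_nat j * (of_nat j - 1) * nc (i+j+1) (i+1)"
  proof -
    have "nc (i+j+1) (i+2) * (of_nat (i+2) * of_nat (i+3)) = of_nat j * of_nat (j - 1) * nc (i+j+1) (i+1)"
      using nc_R3[of "i+j+1" "i+1"] by (simp add: eval_nat_numeral ac_simps)
    moreover have "of_nat j * (of_nat (j - 1) :: rat) = of_nat j * (of_nat j - 1)"
      by (cases j) auto
    ultimately show ?thesis by simp
  qed
  have h5: "nc (i+j+2) (i+2) * (of_nat (i+2) * of_nat (i+3)) = of_nat (j+1) * of_nat j * nc (i+j+2) (i+1)"
    using nc_R3[of "i+j+2" "i+1"] by (simp add: eval_nat_numeral ac_simps)
  define x1 where "x1 = nc (i+j+3) (i+2)"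
  define x2 where "x2 = nc (i+j+2) (i+1)"
  define x3 where "x3 = nc (i+j+1) (i+1)"
  define x4 where "x4 = nc (i+j+1) (i+2)"
  define x5 where "x5 = nc (i+j+2) (i+2)"
  define D1 where "D1 = (of_nat (i+1) * of_nat (i+2) :: rat)"
  define D2 where "D2 = (of_nat (i+2) * of_nat (i+3) :: rat)"
  define c where "c = (2 * of_nat (i+j+3) - 1 :: rat)"
  have cc: "of_nat (2*(i+j+3)-1) = c" unfolding c_def by (simp add: of_nat_diff)
  have H1: "x1 * D2 = of_nat (i+j+3) * of_nat (i+j+2) * x2" using h1 unfolding x1_def x2_def D2_def .
  have H2: "x2 * D1 = of_nat (i+j+2) * of_nat (i+j+1) * b" using h2 unfolding x2_def D1_def .
  have H3: "x3 * D1 = of_nat (j+1) * of_nat j * b" using h3 unfolding x3_def D1_def .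
  have H4: "x4 * D2 = of_nat j * (of_nat j - 1) * x3" using h4 unfolding x4_def x3_def D2_def .
  have H5: "x5 * D2 = of_nat (j+1) * of_nat j * x2" using h5 unfolding x5_def x2_def D2_def .
  let ?G = "of_nat (i+j+4) * x1 - c * (x5 + x2) + of_nat (i+j+1) * (x4 - 2 * x3 + b)"
  have "?G * (D1 * D2) = of_nat (i+j+4) * (x1 * D2) * D1 - c * ((x5 * D2) * D1 + (x2 * D1) * D2)
      + of_nat (i+j+1) * ((x4 * D2) * D1 - 2 * (x3 * D1) * D2 + b * D1 * D2)"
    by (simp add: algebra_simps)
  also have "\<dots> = of_nat (i+j+4) * (of_nat (i+j+3) * of_nat (i+j+2) * x2) * D1
      - c * ((of_nat (j+1) * of_nat j * x2) * D1 + (x2 * D1) * D2)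
      + of_nat (i+j+1) * ((of_nat j * (of_nat j - 1) * x3) * D1 - 2 * (x3 * D1) * D2 + b * D1 * D2)"
    unfolding H1 H4 H5 ..
  also have "\<dots> = of_nat (i+j+4) * (of_nat (i+j+3) * of_nat (i+j+2)) * (x2 * D1)
      - c * ((of_nat (j+1) * of_nat j) * (x2 * D1) + (x2 * D1) * D2)
      + of_nat (i+j+1) * ((of_nat j * (of_nat j - 1)) * (x3 * D1) - 2 * (x3 * D1) * D2 + b * D1 * D2)"
    by (simp add: algebra_simps)
  also have "\<dots> = 0"
    unfolding H2 H3 unfolding c_def D1_def D2_def by (simp add: algebra_simps)
  finally have "?G * (D1 * D2) = 0" .
  moreover have "D1 * D2 \<noteq> 0" unfolding D1_def D2_def by simp
  ultimately have "?G = 0" by simp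
  then show ?thesis unfolding cc x1_def x2_def x3_def x4_def x5_def b_def .
qed

lemma nc_rec:
  assumes "n \<ge> 3"
  shows "of_nat (n+1) * nc n k - of_nat (2*n-1) * (nc (n-1) k + (if k = 0 then 0 else nc (n-1) (k-1)))
     + of_nat (n-2) * (nc (n-2) k - 2 * (if k = 0 then 0 else nc (n-2) (k-1)) + (if k < 2 then 0 else nc (n-2) (k-2))) = 0"
proof -
  obtain p where n: "n = p + 3" using assms by (metis add.commute le_Suc_ex)
  consider "k = 0" | "k = 1" | "k \<ge> 2 \<and> k < n" | "k \<ge> n" by linarith
  then show ?thesis
  proof cases
    case 1
    then show ?thesis unfolding n by (simp add: nc_0 of_nat_diff algebra_simps)
  next
    case 2
    then show ?thesis unfolding n by (simp add: nc_1 nc_0 of_nat_diff field_simps)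
  next
    case 3
    then obtain i j where k: "k = i + 2" and nn: "n = i + j + 3"
      by (metis add.commute le_Suc_ex less_imp_Suc_add add_Suc_right numeral_3_eq_3 numeral_2_eq_2 add_Suc add_2_eq_Suc')
    have "of_nat (n+1) = (of_nat (i+j+4) :: rat)" "of_nat (n-2) = (of_nat (i+j+1) :: rat)" 
      unfolding nn by simp_all
    moreover have "nc (n-1) k = nc (i+j+2) (i+2)" "nc (n-1) (k-1) = nc (i+j+2) (i+1)"
      "nc (n-2) k = nc (i+j+1) (i+2)" "nc (n-2) (k-1) = nc (i+j+1) (i+1)" "nc (n-2) (k-2) = nc (i+j+1) i"
      unfolding nn k by simp_all
    moreover have "k \<noteq> 0" "\<not> k < 2" "2*n-1 = 2*(i+j+3)-1" "nc n k = nc (i+j+3) (i+2)" unfolding k nn by simp_all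
    ultimately show ?thesis using nc_rec_main[of i j] by (simp add: algebra_simps)
  next
    case 4
    then show ?thesis using assms by (simp add: nc_zero)
  qed
qed

lemma tvar_mult: "tvar * p = pCons 0 p"
  by (simp add: tvar_def)

lemma nar_rec:
  assumes "n \<ge> 3"
  shows "of_nat (n+1) * narayana n - of_nat (2*n-1) * ((1 + tvar) * narayana (n-1))
     + of_nat (n-2) * ((1 - tvar)^2 * narayana (n-2)) = 0"
proof (rule poly_eqI)
  fix k
  have a: "(1 + tvar) * p = p + pCons 0 p" for p :: "rat poly"
    by (simp add: algebra_simps tvar_mult)
  have b: "(1 - tvar)^2 * p = p - 2 * pCons 0 p + pCons 0 (pCons 0 p)" for p :: "rat poly"
    by (simp add: power2_eq_square algebra_simps tvar_mult)
  have c2: "coeff (2 * p) j = 2 * coeff p j" for p :: "rat poly" and j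
    using of_nat_mult_conv_smult[of 2 p] by simp
  show "coeff (of_nat (n+1) * narayana n - of_nat (2*n-1) * ((1 + tvar) * narayana (n-1))
     + of_nat (n-2) * ((1 - tvar)^2 * narayana (n-2))) k = coeff 0 k"
    unfolding a b of_nat_mult_conv_smult
    using nc_rec[OF assms, of k]
    by (cases k; cases "k - 1") (simp_all add: coeff_narayana coeff_pCons' c2)
qed

abbreviation tt :: "rat poly fps" where "tt \<equiv> fps_const tvar"

definition uu :: "rat poly fps" where "uu = gamma_fps - 1"

lemma uu_nth: "fps_nth uu n = (if n = 0 then 0 else narayana n)"
proof -
  have "narayana 0 = 1" unfolding narayana_def by simp
  then show ?thesis unfolding uu_def gamma_fps_def by simp
qed

lemma narayana_1: "narayana (Suc 0) = 1"
  unfolding narayana_monom by (simp add: nc_def)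

lemma narayana_2: "narayana 2 = 1 + tvar"
  unfolding narayana_monom tvar_def by (simp add: nc_def numeral_2_eq_2 monom_altdef one_pCons)

definition SS :: "rat poly fps" where "SS = fps_const (2 * tvar) * (fps_X * uu) + fps_const (1 + tvar) * fps_X - 1"

lemma fps_numeral_mult_nth: "fps_nth (numeral k * f) n = numeral k * fps_nth (f :: 'a::comm_ring_1 fps) n"
  by (metis fps_mult_left_const_nth numeral_fps_const)

lemma SS_nth: "fps_nth SS n = (if n = 0 then -1 else if n = 1 then 1 + tvar else 2 * tvar * narayana (n - 1))"
  unfolding SS_def by (auto simp: uu_nth)

lemma SS_0: "fps_nth SS 0 = -1" and SS_1: "fps_nth SS (Suc 0) = 1 + tvar"
  and SS_SS: "fps_nth SS (Suc (Suc n)) = 2 * tvar * narayana (Suc n)"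
  by (simp_all add: SS_nth)

lemma quad_nth: "fps_nth ((fps_const a + fps_const b * fps_X + fps_const c * fps_X^2) * F) n
   = a * fps_nth F n + (if n = 0 then 0 else b * fps_nth F (n-1)) + (if n < 2 then 0 else c * fps_nth F (n-2))"
proof -
  have "(fps_const a + fps_const b * fps_X + fps_const c * fps_X^2) * F
     = fps_const a * F + fps_const b * (fps_X * F) + fps_const c * (fps_X^2 * F)"
    by (simp add: algebra_simps)
  then show ?thesis by (simp add: fps_X_power_mult_nth)
qed

definition DD :: "rat poly fps" where 
  "DD = fps_const 1 + fps_const (-2*(1+tvar)) * fps_X + fps_const ((1-tvar)^2) * fps_X^2"
definition DD' :: "rat poly fps" where 
  "DD' = fps_const (-2*(1+tvar)) + fps_const (2*(1-tvar)^2) * fps_X + fps_const 0 * fps_X^2"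

lemma deriv_DD: "fps_deriv DD = DD'"
  by (rule fps_ext) (simp add: DD_def DD'_def)


lemma SS_ode: "2 * (DD * fps_deriv SS) = DD' * SS"
proof (rule fps_ext)
  fix n
  have L: "fps_nth (2 * (DD * fps_deriv SS)) n = 2 * fps_nth (DD * fps_deriv SS) n"
    by (rule fps_numeral_mult_nth)
  consider "n = 0" | "n = 1" | "n = 2" | "n \<ge> 3" by linarith
  then show "fps_nth (2 * (DD * fps_deriv SS)) n = fps_nth (DD' * SS) n"
  proof cases
    case 1
    then show ?thesis unfolding L DD_def DD'_def quad_nth by (simp add: SS_nth)
  next
    case 2
    show ?thesis unfolding L DD_def DD'_def quad_nth 2
      by (simp add: SS_0 SS_1 SS_SS narayana_1 numeral_fps_const) (simp add: algebra_simps power2_eq_square)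
  next
    case 3
    show ?thesis unfolding L DD_def DD'_def quad_nth 3
      by (simp add: SS_0 SS_1 SS_SS narayana_1 narayana_2[unfolded numeral_2_eq_2] numeral_fps_const eval_nat_numeral algebra_simps power2_eq_square)
  next
    case 4
    then obtain m where m: "n = m + 3" by (metis add.commute le_Suc_ex)
    have r: "of_nat (m+3+1) * narayana (m+3) - of_nat (2*(m+3)-1) * ((1 + tvar) * narayana (m+3-1))
     + of_nat (m+3-2) * ((1 - tvar)^2 * narayana (m+3-2)) = 0"
      by (rule nar_rec) simp
    have r2: "of_nat (2*(m+3)-1) = (2 * of_nat m + 5 :: rat poly)" by (simp add: of_nat_diff)
    define E where "E = of_nat m * narayana (m+3) + 4 * narayana (m+3) - (2 * of_nat m + 5) * ((1 + tvar) * narayana (m+2))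
     + (of_nat m + 1) * ((1 - tvar)^2 * narayana (m+1))"
    have r': "E = 0"
      using r unfolding r2 E_def by (simp add: algebra_simps eval_nat_numeral)
    have d: "2 * fps_nth (DD * fps_deriv SS) n - fps_nth (DD' * SS) n = 4 * tvar * E"
      unfolding DD_def DD'_def quad_nth m E_def
      by (simp add: SS_SS eval_nat_numeral algebra_simps power2_eq_square)
    show ?thesis unfolding L using d r' by simp
  qed
qed

lemma SS_sq: "SS^2 = DD"
proof -
  define TT where "TT = SS^2 - DD"
  have ode: "DD * fps_deriv TT = DD' * TT"
  proof -
    have "DD * fps_deriv TT = SS * (2 * (DD * fps_deriv SS)) - DD * DD'"
      unfolding TT_def deriv_DD[symmetric] by (simp add: power2_eq_square algebra_simps)
    also have "\<dots> = DD' * TT" unfolding SS_ode TT_def deriv_DD by (simp add: power2_eq_square algebra_simps)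
    finally show ?thesis .
  qed
  have DD0: "fps_nth DD 0 = 1" unfolding DD_def by simp
  have all: "\<forall>j\<le>n. fps_nth TT j = 0" for n
  proof (induction n)
    case 0
    then show ?case by (simp add: TT_def DD0 power2_eq_square SS_0)
  next
    case (Suc n)
    have e: "fps_nth (DD * fps_deriv TT) n = fps_nth (DD' * TT) n" using ode by simp
    have "fps_nth (DD' * TT) n = 0"
      unfolding DD'_def quad_nth using Suc.IH by simp
    moreover have "fps_nth (DD * fps_deriv TT) n = of_nat (n+1) * fps_nth TT (n+1)"
      unfolding DD_def quad_nth using Suc.IH by simp
    ultimately have "of_nat (n+1) * fps_nth TT (n+1) = 0" using e by simp
    then have "fps_nth TT (n+1) = 0" by (simp del: of_nat_Suc)
    then show ?case using Suc.IH le_Suc_eq by auto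
  qed
  have "TT = 0" by (rule fps_ext) (use all in auto)
  then show ?thesis unfolding TT_def by simp
qed

lemma ring_id: fixes x u X :: "'a::comm_ring_1"
  shows "(2*x*X*u + (1+x)*X - 1)^2 - (1 - 2*(1+x)*X + (1-x)^2*X^2) = 4*x*X*(X*(1+u)*(1+x*u) - u)"
  by (simp add: power2_eq_square algebra_simps)

lemma fps_const_conv1: "fps_const (2 * tvar) = 2 * tt" "fps_const (1 + tvar) = 1 + tt"
  "fps_const (-2*(1+tvar)) = -2*(1+tt)"
  by (simp_all add: fps_eq_iff numeral_fps_const)

lemma fps_const_conv2: "fps_const ((1-tvar)^2) = (1-tt)^2"
proof -
  have "1 - tt = fps_const (1-tvar)" by (simp add: fps_eq_iff)
  then show ?thesis by (simp only: fps_const_power)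
qed

lemmas fps_const_conv = fps_const_conv1 fps_const_conv2

lemma uu_eq: "uu = fps_X * (1 + uu) * (1 + tt * uu)"
proof -
  have SS': "SS = 2*tt*fps_X*uu + (1+tt)*fps_X - 1" unfolding SS_def fps_const_conv by (simp add: algebra_simps)
  have DD2: "DD = 1 - 2*(1+tt)*fps_X + (1-tt)^2*fps_X^2" unfolding DD_def fps_const_conv by (simp add: algebra_simps)
  have "4*tt*fps_X*(fps_X*(1+uu)*(1+tt*uu) - uu) = 0"
    using ring_id[of tt fps_X uu] SS_sq unfolding SS' DD2 by simp
  moreover have "4*tt*fps_X \<noteq> (0 :: rat poly fps)"
    by (simp add: numeral_fps_const tvar_def)
  ultimately show ?thesis by simp
qed




definition TQ :: "rat poly fps" where "TQ = fps_const tvar"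
definition phi :: "rat poly fps" where "phi = (1 + fps_X) * (1 + TQ * fps_X)"
definition BB :: "nat \<Rightarrow> rat poly fps" where "BB k = (\<Sum>r<k. (TQ * fps_X^2)^r)"

lemma uu_eq': "uu = fps_X * (1 + uu) * (1 + TQ * uu)"
  using uu_eq unfolding TQ_def .
definition rho :: "nat \<Rightarrow> nat \<Rightarrow> rat poly fps" where
  "rho m k = (if k = 0 then fps_X^m else if k \<le> m then fps_X^(m-k) * phi * BB k
              else (TQ*fps_X)^(k-m) * phi * BB m)"
definition sig :: "nat \<Rightarrow> nat \<Rightarrow> rat poly fps" where
  "sig m k = rho m (k+1) + (if k \<ge> 1 then (1+TQ) * rho m k else 0) + (if k \<ge> 2 then TQ * rho m (k-1) else 0)"

lemma BB_0: "BB 0 = 0" by (simp add: BB_def)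
lemma BB_Suc: "BB (Suc k) = BB k + (TQ*fps_X^2)^k" by (simp add: BB_def)
lemma BB_shift: "TQ*fps_X^2 * BB k + 1 = BB (Suc k)"
  by (induction k) (simp_all add: BB_def algebra_simps power2_eq_square)

lemma phi_alt: "phi = 1 + (1+TQ)*fps_X + TQ*fps_X^2"
  by (simp add: phi_def algebra_simps power2_eq_square)

lemma key_poly:
  assumes m: "m \<ge> 1"
  shows "fps_X * sig m k = phi * (rho m k - (if k = m then 1 else 0))"
proof -
  consider "k = 0" | "k = 1 \<and> k < m" | "k \<ge> 2 \<and> k < m" | "k = m" | "k > m" by linarith
  then show ?thesis
  proof cases
    case 1
    obtain d where d: "m = d + 1" using m by (intro that[of "m - 1"]) simp
    show ?thesis using 1 unfolding sig_def rho_def d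
      by (simp add: BB_Suc BB_0 algebra_simps)
  next
    case 2
    obtain d where d: "m = d + 2" using 2 by (intro that[of "m - 2"]) linarith
    have "fps_X * sig m k = fps_X * (fps_X^d * phi * BB 2 + (1+TQ) * (fps_X^(d+1) * phi * BB 1))"
      unfolding sig_def rho_def d using 2 by (simp add: eval_nat_numeral)
    also have "\<dots> = phi * (fps_X^(d+1) * phi * BB 1)"
      unfolding phi_alt by (simp add: BB_Suc BB_0 eval_nat_numeral power_add algebra_simps)
    also have "\<dots> = phi * (rho m k - (if k = m then 1 else 0))"
      unfolding rho_def d using 2 by simp
    finally show ?thesis .
  next
    case 3
    obtain d i where d: "m = i + d + 3" and i: "k = i + 2"
      using 3 by (intro that[of "k - 2" "m - k - 1"]) linarith+
    have b1: "BB (i+3) = BB (i+1) + (TQ*fps_X^2)^(i+1) + (TQ*fps_X^2)^(i+2)"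
      by (simp add: BB_Suc eval_nat_numeral)
    have b2: "BB (i+2) = BB (i+1) + (TQ*fps_X^2)^(i+1)"
      by (simp add: BB_Suc eval_nat_numeral)
    have "fps_X * sig m k = fps_X * (fps_X^d * phi * BB (i+3) + (1+TQ) * (fps_X^(d+1) * phi * BB (i+2)) + TQ * (fps_X^(d+2) * phi * BB (i+1)))"
      unfolding sig_def rho_def d i by (simp add: eval_nat_numeral)
    also have "\<dots> = phi * (fps_X^(d+1) * phi * BB (i+2))"
      unfolding b1 b2 phi_alt by (simp add: power_add algebra_simps power2_eq_square)
    also have "\<dots> = phi * (rho m k - (if k = m then 1 else 0))"
      unfolding rho_def d i by (simp add: eval_nat_numeral)
    finally show ?thesis .
  next
    case 4
    have bm: "BB m = TQ*fps_X^2 * BB (m-1) + 1"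
      using BB_shift[of "m-1"] m by simp
    have "fps_X * sig m k = fps_X * ((TQ*fps_X) * phi * BB m + (1+TQ) * (phi * BB m) + TQ * (fps_X * phi * BB (m-1)))"
    proof (cases "m = 1")
      case True
      then show ?thesis unfolding sig_def rho_def 4 by (simp add: BB_0)
    next
      case False
      then show ?thesis unfolding sig_def rho_def 4 using m by simp
    qed
    also have "\<dots> = phi * (phi * BB m - 1)"
      unfolding bm unfolding phi_alt by (simp add: algebra_simps power2_eq_square)
    also have "\<dots> = phi * (rho m k - (if k = m then 1 else 0))"
      unfolding rho_def 4 using m by simp
    finally show ?thesis .
  next
    case 5
    obtain e where e: "k = m + 1 + e" using 5 by (intro that[of "k - m - 1"]) linarith
    have r1: "rho m (k-1) = (TQ*fps_X)^e * phi * BB m"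
      unfolding rho_def e using m by auto
    have "fps_X * sig m k = fps_X * ((TQ*fps_X)^(e+2) * phi * BB m + (1+TQ) * ((TQ*fps_X)^(e+1) * phi * BB m) + TQ * ((TQ*fps_X)^e * phi * BB m))"
      unfolding sig_def r1[symmetric] unfolding rho_def e using m by (simp add: eval_nat_numeral)
    also have "\<dots> = phi * ((TQ*fps_X)^(e+1) * phi * BB m)"
      unfolding phi_alt by (simp add: power_add algebra_simps power2_eq_square)
    also have "\<dots> = phi * (rho m k - (if k = m then 1 else 0))"
      unfolding rho_def e using m by simp
    finally show ?thesis .
  qed
qed

lemma regroup:
  fixes a f :: "nat \<Rightarrow> 'a::comm_ring_1"
  assumes z: "\<forall>j>i. a j = 0"
  shows "(\<Sum>k\<le>Suc i. (if k = 0 then 0 else a (k-1) + c * a k + d * a (k+1)) * f k)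
       = (\<Sum>k\<le>i. a k * (f (Suc k) + (if k \<ge> 1 then c * f k else 0) + (if k \<ge> 2 then d * f (k-1) else 0)))"
proof -
  have L: "(\<Sum>k\<le>Suc i. (if k = 0 then 0 else a (k-1) + c * a k + d * a (k+1)) * f k)
     = (\<Sum>k\<le>i. a k * f (Suc k)) + c * (\<Sum>k\<le>i. a (Suc k) * f (Suc k)) + d * (\<Sum>k\<le>i. a (Suc (Suc k)) * f (Suc k))"
    unfolding sum.atMost_Suc_shift by (simp add: sum.distrib sum_distrib_left algebra_simps)
  have s1: "(\<Sum>k\<le>i. a (Suc k) * f (Suc k)) = (\<Sum>k\<le>i. (if k \<ge> 1 then a k * f k else 0))"
  proof -
    have "(\<Sum>k\<le>Suc i. (if k \<ge> 1 then a k * f k else 0)) = (\<Sum>k\<le>i. a (Suc k) * f (Suc k))"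
      unfolding sum.atMost_Suc_shift by simp
    moreover have "(\<Sum>k\<le>Suc i. (if k \<ge> 1 then a k * f k else 0)) = (\<Sum>k\<le>i. (if k \<ge> 1 then a k * f k else 0))"
      using z by simp
    ultimately show ?thesis by simp
  qed
  have s2: "(\<Sum>k\<le>i. a (Suc (Suc k)) * f (Suc k)) = (\<Sum>k\<le>i. (if k \<ge> 2 then a k * f (k-1) else 0))"
  proof -
    have "(\<Sum>k\<le>Suc (Suc i). (if k \<ge> 2 then a k * f (k-1) else 0)) = (\<Sum>k\<le>i. a (Suc (Suc k)) * f (Suc k))"
      unfolding sum.atMost_Suc_shift by simp
    moreover have "(\<Sum>k\<le>Suc (Suc i). (if k \<ge> 2 then a k * f (k-1) else 0)) = (\<Sum>k\<le>i. (if k \<ge> 2 then a k * f (k-1) else 0))"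
      using z by simp
    ultimately show ?thesis by simp
  qed
  have r1: "(\<Sum>k\<le>i. a k * (if k \<ge> 1 then c * f k else 0)) = c * (\<Sum>k\<le>i. (if k \<ge> 1 then a k * f k else 0))"
    by (subst sum_distrib_left) (rule sum.cong; simp)
  have r2: "(\<Sum>k\<le>i. a k * (if k \<ge> 2 then d * f (k-1) else 0)) = d * (\<Sum>k\<le>i. (if k \<ge> 2 then a k * f (k-1) else 0))"
    by (subst sum_distrib_left) (rule sum.cong; simp)
  have R: "(\<Sum>k\<le>i. a k * (f (Suc k) + (if k \<ge> 1 then c * f k else 0) + (if k \<ge> 2 then d * f (k-1) else 0)))
    = (\<Sum>k\<le>i. a k * f (Suc k)) + (\<Sum>k\<le>i. a k * (if k \<ge> 1 then c * f k else 0)) + (\<Sum>k\<le>i. a k * (if k \<ge> 2 then d * f (k-1) else 0))"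
    by (simp only: distrib_left sum.distrib)
  show ?thesis unfolding L s1 s2 R r1 r2 ..
qed

lemma uu0: "fps_nth uu 0 = 0" by (simp add: uu_nth)

definition rc :: "nat \<Rightarrow> nat \<Rightarrow> rat poly fps" where "rc m k = rho m k oo uu"

lemma comp_mult: "(a * b) oo uu = (a oo uu) * (b oo uu)"
  by (rule fps_compose_mult_distrib) (simp add: uu0)
lemma comp_X: "fps_X oo uu = uu" by (simp add: uu0)
lemma comp_TQ: "TQ oo uu = TQ" by (simp add: TQ_def)
lemma comp_pow: "(a ^ n) oo uu = (a oo uu) ^ n"
  by (rule fps_compose_power[symmetric]) (simp add: uu0)

lemma phi_comp: "phi oo uu = (1 + uu) * (1 + TQ * uu)"
  unfolding phi_def comp_mult fps_compose_add_distrib comp_X comp_TQ by simp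

lemma uu_phi: "uu = fps_X * (phi oo uu)"
  unfolding phi_comp using uu_eq' by (simp add: algebra_simps)

lemma phi_comp_ne: "phi oo uu \<noteq> 0"
proof
  assume h: "phi oo uu = 0"
  have "fps_nth phi 0 = 1" by (simp add: phi_def TQ_def)
  then have "fps_nth (phi oo uu) 0 = 1" by simp
  then show False using h by simp
qed

lemma key_comp:
  assumes m: "m \<ge> 1"
  shows "fps_X * (sig m k oo uu) = rc m k - (if k = m then 1 else 0)"
proof -
  have "(fps_X * sig m k) oo uu = (phi * (rho m k - (if k = m then 1 else 0))) oo uu"
    using key_poly[OF m] by simp
  then have "uu * (sig m k oo uu) = (phi oo uu) * (rc m k - (if k = m then 1 else 0))"
    unfolding comp_mult comp_X rc_def by (simp add: fps_compose_sub_distrib)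
  then have "(phi oo uu) * (fps_X * (sig m k oo uu)) = (phi oo uu) * (rc m k - (if k = m then 1 else 0))"
    by (subst (asm) uu_phi) (simp add: algebra_simps)
  then show ?thesis using phi_comp_ne by simp
qed

lemma sig_comp: "sig m k oo uu = rc m (k+1) + (if k \<ge> 1 then (1+TQ) * rc m k else 0) + (if k \<ge> 2 then TQ * rc m (k-1) else 0)"
  by (simp add: sig_def rc_def fps_compose_add_distrib comp_mult comp_TQ)

lemma one_tt: "1 + fps_const tvar = fps_const (1 + tvar)"
  by (simp add: fps_eq_iff)

definition RR :: "nat \<Rightarrow> nat \<Rightarrow> rat poly" where "RR i k = fps_nth (uu^k) i"

lemma RR_zero: "i < k \<Longrightarrow> RR i k = 0"
  unfolding RR_def using startsby_zero_power_prefix[of uu k] uu0 by simp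

lemma RR_diag: "RR k k = 1"
  unfolding RR_def using startsby_zero_power_nth_same[of uu k] uu0 by (simp add: uu_nth narayana_1)

lemma RR_00: "RR 0 0 = 1" by (simp add: RR_def)

lemma RR_Suc0: "RR (Suc i) 0 = 0" by (simp add: RR_def)

lemma RR_rec: "RR (Suc i) (Suc k) = RR i k + (1+tvar) * RR i (Suc k) + tvar * RR i (Suc (Suc k))"
proof -
  have "uu^(Suc k) = fps_X * (uu^k + fps_const (1+tvar) * uu^(Suc k) + fps_const tvar * uu^(Suc (Suc k)))"
  proof -
    have "uu^(Suc k) = uu * uu^k" by simp
    also have "\<dots> = fps_X * ((1 + uu) * (1 + TQ * uu)) * uu^k" by (subst uu_eq') simp
    also have "\<dots> = fps_X * (uu^k + (1 + TQ) * uu^(Suc k) + TQ * uu^(Suc (Suc k)))"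
      by (simp add: algebra_simps)
    finally show ?thesis unfolding TQ_def one_tt by simp
  qed
  then show ?thesis unfolding RR_def by (metis (no_types, lifting) fps_X_mult_nth fps_add_nth fps_mult_left_const_nth diff_Suc_1 nat.distinct(1))
qed

lemma fps_shift_Suc_X: "fps_X * fps_shift (Suc i) f = fps_shift i f - fps_const (fps_nth f i)" for f :: "rat poly fps"
proof (rule fps_ext)
  fix n show "fps_nth (fps_X * fps_shift (Suc i) f) n = fps_nth (fps_shift i f - fps_const (fps_nth f i)) n"
    by (cases n) (subst fps_X_mult_nth, simp)+
qed

lemma main_L:
  assumes m: "m \<ge> 1"
  shows "(\<Sum>k\<le>i. fps_const (RR i k) * rc m k) = fps_shift i (uu^m)"
proof (induction i)
  case 0
  have "rc m 0 = uu^m" unfolding rc_def rho_def by (simp add: comp_pow comp_X)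
  then show ?case by (simp add: RR_00)
next
  case (Suc i)
  define A where "A k = fps_const (RR i k)" for k
  have Az: "\<forall>j>i. A j = 0" unfolding A_def using RR_zero by simp
  have c: "fps_const (RR (Suc i) k) = (if k = 0 then 0 else A (k-1) + (1+TQ) * A k + TQ * A (k+1))" for k
    by (cases k) (simp_all add: A_def RR_Suc0 RR_rec TQ_def one_tt)
  have "(\<Sum>k\<le>Suc i. fps_const (RR (Suc i) k) * rc m k)
      = (\<Sum>k\<le>i. A k * (rc m (Suc k) + (if k \<ge> 1 then (1+TQ) * rc m k else 0) + (if k \<ge> 2 then TQ * rc m (k-1) else 0)))"
    unfolding c by (rule regroup[OF Az])
  also have "\<dots> = (\<Sum>k\<le>i. A k * (sig m k oo uu))"
    unfolding sig_comp by simp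
  finally have e: "(\<Sum>k\<le>Suc i. fps_const (RR (Suc i) k) * rc m k) = (\<Sum>k\<le>i. A k * (sig m k oo uu))" .
  have "fps_X * (\<Sum>k\<le>i. A k * (sig m k oo uu)) = (\<Sum>k\<le>i. A k * (rc m k - (if k = m then 1 else 0)))"
    unfolding sum_distrib_left by (rule sum.cong) (simp_all add: key_comp[OF m, symmetric] algebra_simps)
  also have "\<dots> = (\<Sum>k\<le>i. A k * rc m k) - (\<Sum>k\<le>i. (if k = m then A k else 0))"
  proof -
    have "A k * (rc m k - (if k = m then 1 else 0)) = A k * rc m k - (if k = m then A k else 0)" for k
      by (simp add: right_diff_distrib)
    then show ?thesis by (simp add: sum_subtractf)
  qed
  also have "(\<Sum>k\<le>i. (if k = m then A k else 0)) = A m"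
    using Az by (cases "m \<le> i") simp_all
  also have "(\<Sum>k\<le>i. A k * rc m k) = fps_shift i (uu^m)" using Suc.IH unfolding A_def .
  also have "A m = fps_const (fps_nth (uu^m) i)" unfolding A_def RR_def ..
  also have "fps_shift i (uu^m) - fps_const (fps_nth (uu^m) i) = fps_X * fps_shift (Suc i) (uu^m)"
    by (rule fps_shift_Suc_X[symmetric])
  finally have "fps_X * (\<Sum>k\<le>Suc i. fps_const (RR (Suc i) k) * rc m k) = fps_X * fps_shift (Suc i) (uu^m)"
    unfolding e .
  then show ?case by simp
qed

lemma hankel_entry:
  assumes m: "m \<ge> 1"
  shows "fps_nth (uu^m) (i+j) = (\<Sum>k\<le>i. RR i k * (\<Sum>l\<le>j. fps_nth (rho m k) l * RR j l))"
proof -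
  have "fps_nth (uu^m) (i+j) = fps_nth (fps_shift i (uu^m)) j" by (simp add: add.commute)
  also have "\<dots> = fps_nth (\<Sum>k\<le>i. fps_const (RR i k) * rc m k) j" unfolding main_L[OF m] ..
  also have "\<dots> = (\<Sum>k\<le>i. RR i k * fps_nth (rc m k) j)" by (simp add: fps_sum_nth)
  also have "\<dots> = (\<Sum>k\<le>i. RR i k * (\<Sum>l\<le>j. fps_nth (rho m k) l * RR j l))"
    unfolding rc_def fps_compose_nth RR_def atMost_atLeast0 ..
  finally show ?thesis .
qed




lemma det_upper_tri':
  fixes A :: "'a::comm_ring_1 mat"
  assumes A: "A \<in> carrier_mat n n" and z: "\<And>i j. i < n \<Longrightarrow> j < i \<Longrightarrow> A $$ (i,j) = 0"
  shows "det A = (\<Prod>i<n. A $$ (i,i))"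
proof -
  have "upper_triangular A" unfolding upper_triangular_def using A z by auto
  from det_upper_triangular[OF this A] show ?thesis
    unfolding prod_list_diag_prod using A by (simp add: atLeast0LessThan)
qed

lemma det_zero_row:
  fixes A :: "'a::comm_ring_1 mat"
  assumes A: "A \<in> carrier_mat n n" and k: "k < n" and z: "\<And>j. j < n \<Longrightarrow> A $$ (k,j) = 0"
  shows "det A = 0"
proof -
  have "(\<Prod>i = 0..<n. A $$ (i, p i)) = 0" if p: "p permutes {0..<n}" for p
  proof -
    have "p k < n" using p k by (simp add: permutes_in_image)
    then have "A $$ (k, p k) = 0" using z by simp
    then show ?thesis using k by (intro prod_zero) auto
  qed
  then show ?thesis unfolding det_def'[OF A] by simp
qed

definition anti_mat :: "nat \<Rightarrow> (nat \<Rightarrow> 'a::zero) \<Rightarrow> 'a mat" where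
  "anti_mat n f = mat n n (\<lambda>(i,j). if i + j = n - 1 then f i else 0)"

lemma det_anti_mat: "det (anti_mat n f) = (-1)^(n * (n - 1) div 2) * (\<Prod>i<n. f i :: 'a::comm_ring_1)"
proof (induction n arbitrary: f)
  case 0
  then show ?case unfolding anti_mat_def by simp
next
  case (Suc n)
  have A: "anti_mat (Suc n) f \<in> carrier_mat (Suc n) (Suc n)" unfolding anti_mat_def by simp
  have "det (anti_mat (Suc n) f) = (\<Sum>j<Suc n. anti_mat (Suc n) f $$ (0,j) * cofactor (anti_mat (Suc n) f) 0 j)"
    by (rule laplace_expansion_row[OF A]) simp
  also have "\<dots> = (\<Sum>j<Suc n. if j = n then f 0 * cofactor (anti_mat (Suc n) f) 0 n else 0)"
    by (rule sum.cong) (auto simp: anti_mat_def)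
  also have "\<dots> = f 0 * cofactor (anti_mat (Suc n) f) 0 n" by simp
  also have "mat_delete (anti_mat (Suc n) f) 0 n = anti_mat n (\<lambda>i. f (Suc i))"
    unfolding mat_delete_def anti_mat_def by (rule eq_matI) auto
  then have "cofactor (anti_mat (Suc n) f) 0 n = (-1)^n * det (anti_mat n (\<lambda>i. f (Suc i)))"
    unfolding cofactor_def by simp
  also have "det (anti_mat n (\<lambda>i. f (Suc i))) = (-1)^(n * (n - 1) div 2) * (\<Prod>i<n. f (Suc i))"
    by (rule Suc.IH)
  finally have "det (anti_mat (Suc n) f) = f 0 * ((-1)^n * ((-1)^(n * (n - 1) div 2) * (\<Prod>i<n. f (Suc i))))" .
  also have "\<dots> = (-1)^(n + n * (n - 1) div 2) * (f 0 * (\<Prod>i<n. f (Suc i)))" by (simp add: power_add)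
  also have "n + n * (n - 1) div 2 = Suc n * (Suc n - 1) div 2"
    by (cases n) (simp_all add: algebra_simps)
  also have "f 0 * (\<Prod>i<n. f (Suc i)) = (\<Prod>i<Suc n. f i)" by (simp only: prod.lessThan_Suc_shift)
  finally show ?case .
qed

lemma det_bottom_diag:
  fixes Q :: "'a::idom mat"
  assumes Q: "Q \<in> carrier_mat N N" and mN: "m \<le> N"
  and rows: "\<And>k j. m \<le> k \<Longrightarrow> k < N \<Longrightarrow> j < N \<Longrightarrow> Q $$ (k,j) = (if j = k - m then d (k - m) else 0)"
  shows "det Q = (-1)^(m*(N-m)) * det (mat m m (\<lambda>(i,j). Q $$ (i, N-m+j))) * (\<Prod>a<N-m. d a)"
proof -
  define n where "n = N - m"
  have N: "N = m + n" unfolding n_def using mN by simp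
  have Q': "Q \<in> carrier_mat (m + n) (m + n)" using Q N by simp
  have "det Q = (-1)^(m*n) * det (mat (m + n) (m + n) (\<lambda>(i,j). Q $$ (i, if j < m then j + n else j - m)))"
    by (rule det_swap_cols[OF Q'])
  also have "mat (m + n) (m + n) (\<lambda>(i,j). Q $$ (i, if j < m then j + n else j - m))
    = four_block_mat (mat m m (\<lambda>(i,j). Q $$ (i, N-m+j))) (mat m n (\<lambda>(i,j). Q $$ (i,j)))
        (0\<^sub>m n m) (mat n n (\<lambda>(i,j). if i = j then d i else 0))"
    (is "?L = ?R")
  proof (rule eq_matI)
    fix i j assume i: "i < dim_row ?R" and j: "j < dim_col ?R"
    then have i': "i < m + n" and j': "j < m + n" by auto
    show "?L $$ (i,j) = ?R $$ (i,j)"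
    proof (cases "i < m")
      case True
      then show ?thesis using i' j' unfolding n_def by (auto simp: add.commute)
    next
      case False
      have r: "Q $$ (i, c) = (if c = i - m then d (i - m) else 0)" if "c < N" for c
        using rows[of i c] False i' that N by simp
      show ?thesis
      proof (cases "j < m")
        case True
        then show ?thesis using False i' j' r[of "j + n"] N by auto
      next
        case False2: False
        then show ?thesis using False i' j' r[of "j - m"] N by auto
      qed
    qed
  qed auto
  also have "det (four_block_mat (mat m m (\<lambda>(i,j). Q $$ (i, N-m+j))) (mat m n (\<lambda>(i,j). Q $$ (i,j)))
        (0\<^sub>m n m) (mat n n (\<lambda>(i,j). if i = j then d i else 0)))
     = det (mat m m (\<lambda>(i,j). Q $$ (i, N-m+j))) * det (mat n n (\<lambda>(i,j). if i = j then d i else 0))"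
    by (rule det_four_block_mat_lower_left_zero) auto
  also have "det (mat n n (\<lambda>(i,j). if i = j then d i else 0)) = (\<Prod>a<n. d a)"
    by (subst det_upper_tri'[of _ n]) auto
  finally show ?thesis unfolding n_def by simp
qed

lemma det_shape_U:
  fixes G :: "'a::comm_ring_1 mat"
  assumes G: "G \<in> carrier_mat m m" and z: "\<And>i j. 1 \<le> i \<Longrightarrow> i < m \<Longrightarrow> j < m \<Longrightarrow> j \<noteq> i \<Longrightarrow> G $$ (i,j) = 0"
  shows "det G = (\<Prod>i<m. G $$ (i,i))"
  by (rule det_upper_tri'[OF G]) (use z in auto)

lemma det_shape_A:
  fixes G :: "'a::idom mat"
  assumes G: "G \<in> carrier_mat m m" and m: "m \<ge> 1"
    and z: "\<And>i j. 1 \<le> i \<Longrightarrow> i < m \<Longrightarrow> j < m \<Longrightarrow> j \<noteq> m - i \<Longrightarrow> G $$ (i,j) = 0"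
  shows "det G = G $$ (0,0) * (-1)^((m-1)*(m-2) div 2) * (\<Prod>i<m-1. G $$ (i+1, m-1-i))"
proof -
  define n where "n = m - 1"
  have mn: "m = 1 + n" unfolding n_def using m by simp
  have "G = four_block_mat (mat 1 1 (\<lambda>_. G $$ (0,0))) (mat 1 n (\<lambda>(i,j). G $$ (0, j+1)))
        (0\<^sub>m n 1) (anti_mat n (\<lambda>i. G $$ (i+1, m-1-i)))"
    (is "_ = ?R")
  proof (rule eq_matI)
    fix i j assume i: "i < dim_row ?R" and j: "j < dim_col ?R"
    then have i': "i < 1 + n" and j': "j < 1 + n" by (auto simp: anti_mat_def)
    show "G $$ (i,j) = ?R $$ (i,j)"
    proof (cases "i = 0")
      case True
      then show ?thesis using j' by (cases "j = 0") (auto simp: anti_mat_def)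
    next
      case False
      then have i1: "1 \<le> i" by simp
      show ?thesis
      proof (cases "j = m - i")
        case True
        then show ?thesis using i1 i' j' unfolding anti_mat_def mn by auto
      next
        case False
        have "\<not> ((i - 1) + (j - 1) = n - 1 \<and> j \<ge> 1)" using False i1 i' j' mn by auto
        then show ?thesis using i1 i' j' z[of i j] False unfolding anti_mat_def mn by auto
      qed
    qed
  qed (use G mn in \<open>auto simp: anti_mat_def\<close>)
  then have "det G = det ?R" by simp
  also have "det ?R = det (mat 1 1 (\<lambda>_. G $$ (0,0))) * det (anti_mat n (\<lambda>i. G $$ (i+1, m-1-i)))"
    by (rule det_four_block_mat_lower_left_zero) (auto simp: anti_mat_def)
  also have "det (mat 1 1 (\<lambda>_. G $$ (0,0))) = G $$ (0,0)" by (subst det_single) auto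
  also have "det (anti_mat n (\<lambda>i. G $$ (i+1, m-1-i))) = (-1)^(n*(n-1) div 2) * (\<Prod>i<n. G $$ (i+1, m-1-i))"
    by (rule det_anti_mat)
  finally show ?thesis unfolding n_def by (simp add: mult.assoc numeral_2_eq_2)
qed

lemma det_rot1:
  fixes G :: "'a::comm_ring_1 mat"
  assumes G: "G \<in> carrier_mat m m" and m: "m \<ge> 1"
  shows "det G = (-1)^(m-1) * det (mat m m (\<lambda>(i,j). G $$ (i, if j = 0 then m - 1 else j - 1)))"
proof -
  have G': "G \<in> carrier_mat (1 + (m-1)) (1 + (m-1))" using G m by simp
  have "det G = (-1)^(1*(m-1)) * det (mat (1 + (m-1)) (1 + (m-1)) (\<lambda>(i,j). G $$ (i, if j < 1 then j + (m-1) else j - 1)))"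
    by (rule det_swap_cols[OF G'])
  also have "mat (1 + (m-1)) (1 + (m-1)) (\<lambda>(i,j). G $$ (i, if j < 1 then j + (m-1) else j - 1))
     = mat m m (\<lambda>(i,j). G $$ (i, if j = 0 then m - 1 else j - 1))"
    using m by (intro eq_matI) auto
  finally show ?thesis by simp
qed

definition A2 :: "nat \<Rightarrow> rat poly fps" where
  "A2 m = Abs_fps (\<lambda>n. if (2*m) dvd n then tvar^(n div 2) else 0)"
definition vv :: "rat poly fps" where
  "vv = Abs_fps (\<lambda>n. if n = 0 then 1 else (-1)^n * (1 + tvar^n))"
definition ww :: "nat \<Rightarrow> rat poly fps" where "ww m = vv * A2 m"

lemma phi_fps_const: "phi = fps_const 1 + fps_const (1+tvar) * fps_X + fps_const tvar * fps_X^2"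
  unfolding phi_alt TQ_def one_tt[symmetric] by simp

lemma phi_vv: "phi * vv = 1 - TQ * fps_X^2"
proof (rule fps_ext)
  fix n
  have "fps_nth (phi * vv) n = fps_nth vv n + (if n = 0 then 0 else (1+tvar) * fps_nth vv (n-1)) + (if n < 2 then 0 else tvar * fps_nth vv (n-2))"
    unfolding phi_fps_const quad_nth by simp
  also have "\<dots> = fps_nth (1 - TQ * fps_X^2) n"
  proof -
    consider "n = 0" | "n = 1" | "n = 2" | "n \<ge> 3" by linarith
    then show ?thesis
    proof cases
      case 4
      obtain k where k4: "n = k + 3" using 4 by (intro that[of "n - 3"]) simp
      have "(-1::rat poly)^(k+3) * (1 + tvar^(k+3)) + (1+tvar) * ((-1)^(k+2) * (1 + tvar^(k+2)))
         + tvar * ((-1)^(k+1) * (1 + tvar^(k+1))) = 0"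
        by (simp add: algebra_simps power_add eval_nat_numeral)
      then show ?thesis unfolding k4 by (simp add: vv_def TQ_def eval_nat_numeral)
    qed (simp_all add: vv_def TQ_def algebra_simps numeral_2_eq_2 power2_eq_square)
  qed
  finally show "fps_nth (phi * vv) n = fps_nth (1 - TQ * fps_X^2) n" .
qed

lemma BB_geom: "(1 - TQ*fps_X^2) * BB k = 1 - (TQ*fps_X^2)^k"
proof -
  have "TQ*fps_X^2 * BB k + 1 = BB k + (TQ*fps_X^2)^k" using BB_shift[of k] BB_Suc[of k] by simp
  then show ?thesis by (simp add: algebra_simps)
qed

lemma P_pow: "(TQ*fps_X^2)^k = fps_const (tvar^k) * fps_X^(2*k)"
  unfolding TQ_def by (simp add: power_mult_distrib power_mult fps_const_power)

lemma A2_nth: "fps_nth (A2 m) n = (if (2*m) dvd n then tvar^(n div 2) else 0)"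
  unfolding A2_def by simp

lemma A2_inv:
  assumes m: "m \<ge> 1"
  shows "(1 - (TQ*fps_X^2)^m) * A2 m = 1"
proof (rule fps_ext)
  fix n
  have e: "(1 - (TQ*fps_X^2)^m) * A2 m = A2 m - fps_const (tvar^m) * (fps_X^(2*m) * A2 m)"
    unfolding P_pow by (simp add: algebra_simps)
  show "fps_nth ((1 - (TQ*fps_X^2)^m) * A2 m) n = fps_nth 1 n"
  proof (cases "n < 2*m")
    case True
    have "(2*m) dvd n \<longleftrightarrow> n = 0"
      using True by (auto dest: dvd_imp_le)
    then show ?thesis unfolding e using True by (simp add: fps_X_power_mult_nth A2_nth)
  next
    case False
    then obtain r where r: "n = 2*m + r" by (intro that[of "n - 2*m"]) simp
    have d: "(2*m) dvd n \<longleftrightarrow> (2*m) dvd r" unfolding r by simp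
    have h: "n div 2 = m + r div 2" unfolding r by simp
    show ?thesis unfolding e using m by (simp add: fps_X_power_mult_nth A2_nth d h r power_add)
  qed
qed

lemma ww_inv: assumes m: "m \<ge> 1" shows "phi * BB m * ww m = 1"
proof -
  have "phi * BB m * ww m = (phi * vv) * BB m * A2 m"
    unfolding ww_def by (simp add: ac_simps)
  also have "\<dots> = (1 - TQ * fps_X^2) * BB m * A2 m" unfolding phi_vv by simp
  also have "\<dots> = 1" unfolding BB_geom using A2_inv[OF m] .
  finally show ?thesis .
qed

lemma ww_rec: assumes m: "m \<ge> 1"
  shows "fps_nth (ww m) n = fps_nth vv n + (if n \<ge> 2*m then tvar^m * fps_nth (ww m) (n - 2*m) else 0)"
proof -
  have h: "(1 - (TQ*fps_X^2)^m) * ww m = vv" unfolding ww_def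
    using A2_inv[OF m] by (metis mult.left_commute mult.right_neutral)
  have eq: "ww m = vv + fps_const (tvar^m) * (fps_X^(2*m) * ww m)"
    using h unfolding P_pow by (simp add: algebra_simps)
  have "fps_nth (ww m) n = fps_nth (vv + fps_const (tvar^m) * (fps_X^(2*m) * ww m)) n"
    using arg_cong[OF eq, of "\<lambda>f. fps_nth f n"] .
  then show ?thesis by (simp add: fps_X_power_mult_nth not_less)
qed

lemma qnum_Suc1: "qnum (Suc j) x = 1 + x * qnum j (x :: 'a::comm_ring_1)"
  unfolding qnum_def by (simp only: sum.lessThan_Suc_shift sum_distrib_left power_Suc power_0)

lemma qnum_Suc2: "qnum (Suc j) x = qnum j x + x^j"
  unfolding qnum_def by simp

lemma qnum_Suc_Suc: "qnum (Suc (Suc j)) x = 1 + x^(Suc j) + x * qnum j (x :: 'a::comm_ring_1)"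
  unfolding qnum_Suc1[of "Suc j"] qnum_Suc2[of j] by (simp add: algebra_simps)

lemma ww_mult: assumes m: "m \<ge> 1"
  shows "fps_nth (ww m) (m*j) = (-1)^(m*j) * qnum (j+1) (tvar^m)"
proof (induction j rule: less_induct)
  case (less j)
  consider "j = 0" | "j = 1" | "j \<ge> 2" by linarith
  then show ?case
  proof cases
    case 1
    then show ?thesis using ww_rec[OF m, of 0] m by (simp add: vv_def qnum_def)
  next
    case 2
    then show ?thesis using ww_rec[OF m, of m] m by (simp add: vv_def qnum_def)
  next
    case 3
    then obtain i where i: "j = i + 2" by (intro that[of "j - 2"]) simp
    have IH: "fps_nth (ww m) (m*i) = (-1)^(m*i) * qnum (i+1) (tvar^m)" using less[of i] i by simp
    have e1: "m * j \<ge> 2 * m" "m * j - 2 * m = m * i" using i by (simp_all add: algebra_simps)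
    have "fps_nth (ww m) (m*j) = (-1)^(m*j) * (1 + tvar^(m*j)) + tvar^m * ((-1)^(m*i) * qnum (i+1) (tvar^m))"
      using ww_rec[OF m, of "m*j"] e1 IH m i by (simp add: vv_def)
    also have "(-1)^(m*i) = ((-1)^(m*j) :: rat poly)" 
      unfolding i by (simp add: algebra_simps power_add power_mult)
    also have "(-1)^(m*j) * (1 + tvar^(m*j)) + tvar^m * ((-1)^(m*j) * qnum (i+1) (tvar^m)) 
        = (-1)^(m*j) * qnum (j+1) (tvar^m)"
      unfolding i by (simp add: qnum_Suc_Suc algebra_simps power_add power_mult[symmetric] mult.commute[of m])
    finally show ?thesis .
  qed
qed

lemma qrow_big: assumes m: "m \<ge> 1" and k: "k \<ge> m"
  shows "rho m k * ww m = (TQ * fps_X)^(k-m)"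
proof (cases "k = m")
  case True
  then have "rho m k = phi * BB m" unfolding rho_def using m by simp
  then show ?thesis using ww_inv[OF m] True by simp
next
  case False
  then have "rho m k = (TQ*fps_X)^(k-m) * (phi * BB m)" unfolding rho_def using m k by (simp add: ac_simps)
  then show ?thesis using ww_inv[OF m] by (simp add: ac_simps)
qed

lemma qrow_mid: assumes k1: "1 \<le> k" and km: "k < m"
  shows "rho m k * ww m = fps_X^(m-k) * ((1 - (TQ*fps_X^2)^k) * A2 m)"
proof -
  have "rho m k * ww m = fps_X^(m-k) * ((phi * vv) * BB k * A2 m)"
    unfolding rho_def ww_def using k1 km by (simp add: ac_simps)
  also have "\<dots> = fps_X^(m-k) * ((1 - (TQ*fps_X^2)^k) * A2 m)"
    unfolding phi_vv BB_geom ..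
  finally show ?thesis .
qed

lemma qrow_0: "rho m 0 * ww m = fps_X^m * ww m"
  unfolding rho_def by simp

lemma TQX_pow_nth: "fps_nth ((TQ * fps_X)^e) j = (if j = e then tvar^e else 0)"
  unfolding TQ_def by (simp add: power_mult_distrib fps_const_power)

lemma mid_nth:
  "fps_nth (fps_X^(m-k) * ((1 - (TQ*fps_X^2)^k) * A2 m)) l =
    (if l + k \<ge> m \<and> (2*m) dvd (l+k-m) then tvar^((l+k-m) div 2) else 0)
    - (if l \<ge> m + k \<and> (2*m) dvd (l-m-k) then tvar^k * tvar^((l-m-k) div 2) else 0)"
  if "k < m" for k
proof -
  have e: "(1 - (TQ*fps_X^2)^k) * A2 m = A2 m - fps_const (tvar^k) * (fps_X^(2*k) * A2 m)"
    unfolding P_pow by (simp add: algebra_simps)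
  show ?thesis
  proof (cases "l < m - k")
    case True
    then show ?thesis by (simp add: fps_X_power_mult_nth)
  next
    case False
    have a: "l - (m - k) = l + k - m" using False that by simp
    have b: "(l + k - m < 2*k) \<longleftrightarrow> \<not> (l \<ge> m + k)" using False that by auto
    have c: "l + k - m - 2*k = l - m - k" using False that by simp
    have d: "l + k \<ge> m" using False that by simp
    show ?thesis unfolding e using False d
      by (simp add: fps_X_power_mult_nth A2_nth a b c del: diff_diff_left)
  qed
qed

lemma row0_nth: "fps_nth (fps_X^m * ww m) l = (if l < m then 0 else fps_nth (ww m) (l - m))"
  by (simp add: fps_X_power_mult_nth)





lemma uu_XG: "uu = fps_X * G_fps"
proof (rule fps_ext)
  fix n show "fps_nth uu n = fps_nth (fps_X * G_fps) n"
    unfolding G_fps_def uu_def[symmetric] by (cases n) (simp_all add: uu0)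
qed

lemma gamma2m_eq: "gamma2m m (int i + int j - int m) = fps_nth (uu^m) (i+j)"
proof -
  have "uu^m = fps_X^m * G_fps^m" unfolding uu_XG by (simp add: power_mult_distrib)
  then have e: "fps_nth (uu^m) (i+j) = (if i + j < m then 0 else fps_nth (G_fps^m) (i+j-m))"
    by (simp add: fps_X_power_mult_nth)
  show ?thesis
  proof (cases "i + j < m")
    case True
    then show ?thesis unfolding e gamma2m_def by simp
  next
    case False
    then have hh: "int i + int j - int m = int (i + j - m)" by simp
    have h: "nat (int i + int j - int m) = i + j - m" unfolding hh by simp
    have h2: "\<not> (int i + int j - int m < 0)" unfolding hh by simp
    show ?thesis unfolding e gamma2m_def h using False h2 by simp
  qed
qed

definition Fm :: "nat \<Rightarrow> nat \<Rightarrow> rat poly mat" where "Fm m N = mat N N (\<lambda>(i,j). fps_nth (uu^m) (i+j))"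
definition Rm :: "nat \<Rightarrow> rat poly mat" where "Rm N = mat N N (\<lambda>(i,k). RR i k)"
definition Cm :: "nat \<Rightarrow> nat \<Rightarrow> rat poly mat" where "Cm m N = mat N N (\<lambda>(k,l). fps_nth (rho m k) l)"
definition Wm :: "nat \<Rightarrow> nat \<Rightarrow> rat poly mat" where "Wm m N = mat N N (\<lambda>(l,j). if l \<le> j then fps_nth (ww m) (j-l) else 0)"
definition Qm :: "nat \<Rightarrow> nat \<Rightarrow> rat poly mat" where "Qm m N = mat N N (\<lambda>(k,j). fps_nth (rho m k * ww m) j)"

lemma hankelH_Fm: "hankelH m N = det (Fm m N)"
  unfolding hankelH_def Fm_def gamma2m_eq ..

lemma sum_lessThan_trunc:
  fixes i N :: nat
  assumes "i < N" and "\<And>k. i < k \<Longrightarrow> f k = 0"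
  shows "(\<Sum>k<N. f k) = (\<Sum>k\<le>i. f k)"
proof -
  have s: "{..<N} = {..i} \<union> {i<..<N}" using assms(1) by auto
  have "(\<Sum>k<N. f k) = (\<Sum>k\<le>i. f k) + (\<Sum>k\<in>{i<..<N}. f k)"
    unfolding s by (rule sum.union_disjoint) auto
  also have "(\<Sum>k\<in>{i<..<N}. f k) = 0" by (rule sum.neutral) (auto simp: assms(2))
  finally show ?thesis by simp
qed

lemma sum_swap3:
  fixes A B :: "nat \<Rightarrow> 'a::comm_semiring_1" and C :: "nat \<Rightarrow> nat \<Rightarrow> 'a"
  shows "(\<Sum>l<N. (\<Sum>k<N. A k * C k l) * B l) = (\<Sum>k<N. A k * (\<Sum>l<N. C k l * B l))"
proof -
  have "(\<Sum>l<N. (\<Sum>k<N. A k * C k l) * B l) = (\<Sum>l<N. \<Sum>k<N. A k * C k l * B l)"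
    by (simp add: sum_distrib_right)
  also have "\<dots> = (\<Sum>k<N. \<Sum>l<N. A k * C k l * B l)" by (rule sum.swap)
  also have "\<dots> = (\<Sum>k<N. A k * (\<Sum>l<N. C k l * B l))" by (simp add: sum_distrib_left mult.assoc)
  finally show ?thesis .
qed

lemma Fm_fact: assumes m: "m \<ge> 1" shows "Fm m N = Rm N * Cm m N * (Rm N)\<^sup>T"
proof (rule eq_matI)
  fix i j assume i: "i < dim_row (Rm N * Cm m N * (Rm N)\<^sup>T)" and j: "j < dim_col (Rm N * Cm m N * (Rm N)\<^sup>T)"
  then have i: "i < N" and j: "j < N" by (simp_all add: Rm_def)
  have "(Rm N * Cm m N * (Rm N)\<^sup>T) $$ (i,j) = (\<Sum>l<N. (\<Sum>k<N. RR i k * fps_nth (rho m k) l) * RR j l)"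
    using i j by (simp add: Rm_def Cm_def scalar_prod_def atLeast0LessThan)
  also have "\<dots> = (\<Sum>k<N. RR i k * (\<Sum>l<N. fps_nth (rho m k) l * RR j l))"
    by (rule sum_swap3)
  also have "\<dots> = (\<Sum>k\<le>i. RR i k * (\<Sum>l\<le>j. fps_nth (rho m k) l * RR j l))"
  proof -
    have "(\<Sum>l<N. fps_nth (rho m k) l * RR j l) = (\<Sum>l\<le>j. fps_nth (rho m k) l * RR j l)" for k
      by (rule sum_lessThan_trunc[OF j]) (simp add: RR_zero)
    then have "(\<Sum>k<N. RR i k * (\<Sum>l<N. fps_nth (rho m k) l * RR j l)) = (\<Sum>k<N. RR i k * (\<Sum>l\<le>j. fps_nth (rho m k) l * RR j l))"
      by simp
    also have "\<dots> = (\<Sum>k\<le>i. RR i k * (\<Sum>l\<le>j. fps_nth (rho m k) l * RR j l))"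
      by (rule sum_lessThan_trunc[OF i]) (simp add: RR_zero)
    finally show ?thesis .
  qed
  also have "\<dots> = fps_nth (uu^m) (i+j)" using hankel_entry[OF m] by simp
  finally show "Fm m N $$ (i,j) = (Rm N * Cm m N * (Rm N)\<^sup>T) $$ (i,j)" using i j by (simp add: Fm_def)
qed (simp_all add: Fm_def Rm_def)

lemma det_Rm: "det (Rm N) = 1"
proof -
  have "det (Rm N) = det ((Rm N)\<^sup>T)" by (rule det_transpose[of _ N, symmetric]) (simp add: Rm_def)
  also have "\<dots> = (\<Prod>i<N. (Rm N)\<^sup>T $$ (i,i))"
    by (rule det_upper_tri'[of _ N]) (auto simp: Rm_def RR_zero)
  also have "\<dots> = 1" by (simp add: Rm_def RR_diag)
  finally show ?thesis .
qed

lemma det_Fm: assumes m: "m \<ge> 1" shows "det (Fm m N) = det (Cm m N)"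
proof -
  have c: "Rm N \<in> carrier_mat N N" "Cm m N \<in> carrier_mat N N" by (simp_all add: Rm_def Cm_def)
  have "det (Fm m N) = det (Rm N) * det (Cm m N) * det ((Rm N)\<^sup>T)"
    unfolding Fm_fact[OF m] using c by (simp add: det_mult[of _ N])
  moreover have "det ((Rm N)\<^sup>T) = 1" using det_transpose[OF c(1)] det_Rm by simp
  ultimately show ?thesis by (simp add: det_Rm)
qed

lemma ww0: "fps_nth (ww m) 0 = 1" by (simp add: ww_def vv_def A2_nth)

lemma det_Cm: "det (Cm m N) = det (Qm m N)"
proof -
  have QW: "Qm m N = Cm m N * Wm m N"
  proof (rule eq_matI)
    fix k j assume "k < dim_row (Cm m N * Wm m N)" "j < dim_col (Cm m N * Wm m N)"
    then have k: "k < N" and j: "j < N" by (simp_all add: Cm_def Wm_def)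
    have "(Cm m N * Wm m N) $$ (k,j) = (\<Sum>l<N. fps_nth (rho m k) l * (if l \<le> j then fps_nth (ww m) (j-l) else 0))"
      using k j by (simp add: Cm_def Wm_def scalar_prod_def atLeast0LessThan)
    also have "\<dots> = (\<Sum>l\<le>j. fps_nth (rho m k) l * fps_nth (ww m) (j-l))"
      by (subst sum_lessThan_trunc[OF j]) auto
    also have "\<dots> = fps_nth (rho m k * ww m) j" by (simp add: fps_mult_nth atLeast0AtMost)
    finally show "Qm m N $$ (k,j) = (Cm m N * Wm m N) $$ (k,j)" using k j by (simp add: Qm_def)
  qed (simp_all add: Qm_def Cm_def Wm_def)
  have "det (Wm m N) = 1"
    by (subst det_upper_tri'[of _ N]) (auto simp: Wm_def ww0)
  then show ?thesis unfolding QW by (simp add: det_mult[of _ N] Cm_def Wm_def)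
qed

lemma prod_tpow: "(\<Prod>a<n. (x::'a::comm_monoid_mult)^a) = x^(n*(n-1) div 2)"
proof (induction n)
  case 0 then show ?case by simp
next
  case (Suc n)
  have "n*(n-1) div 2 + n = Suc n * n div 2"
  proof (cases n)
    case 0 then show ?thesis by simp
  next
    case (Suc k)
    have "Suc k * k + 2 * Suc k = Suc (Suc k) * Suc k" by (simp add: algebra_simps)
    then have "(Suc k * k + 2 * Suc k) div 2 = Suc (Suc k) * Suc k div 2" by simp
    then show ?thesis unfolding Suc by simp
  qed
  then have e: "n*(n-1) div 2 + n = Suc n * (Suc n - 1) div 2" by simp
  have "(\<Prod>a<Suc n. x^a) = x^(n*(n-1) div 2) * x^n" using Suc by simp
  also have "\<dots> = x^(n*(n-1) div 2 + n)" by (simp add: power_add)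
  finally show ?case unfolding e .
qed

definition G2 :: "nat \<Rightarrow> nat \<Rightarrow> rat poly mat" where
  "G2 m N = mat m m (\<lambda>(i,j). fps_nth (rho m i * ww m) (N-m+j))"

lemma Qm_bottom: assumes m: "m \<ge> 1" and mN: "m \<le> N"
  shows "det (Qm m N) = (-1)^(m*(N-m)) * det (G2 m N) * tvar^((N-m)*(N-m-1) div 2)"
proof -
  have "det (Qm m N) = (-1)^(m*(N-m)) * det (mat m m (\<lambda>(i,j). Qm m N $$ (i, N-m+j))) * (\<Prod>a<N-m. tvar^a)"
  proof (rule det_bottom_diag[OF _ mN])
    show "Qm m N \<in> carrier_mat N N" by (simp add: Qm_def)
    fix k j assume k: "m \<le> k" "k < N" and j: "j < N"
    show "Qm m N $$ (k,j) = (if j = k - m then tvar^(k-m) else 0)"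
      using k j by (simp add: Qm_def qrow_big[OF m] TQX_pow_nth)
  qed
  also have "mat m m (\<lambda>(i,j). Qm m N $$ (i, N-m+j)) = G2 m N"
    using mN by (intro eq_matI) (auto simp: Qm_def G2_def)
  finally show ?thesis by (simp add: prod_tpow)
qed

lemma Qm_small: assumes m: "m \<ge> 1" and N: "1 \<le> N" "N \<le> m"
  shows "det (Qm m N) = 0"
  by (rule det_zero_row[of _ N 0]) (use N in \<open>auto simp: Qm_def qrow_0 row0_nth\<close>)

lemma G2_row0: "fps_nth (rho m 0 * ww m) l = (if l < m then 0 else fps_nth (ww m) (l-m))"
  unfolding qrow_0 row0_nth ..

lemma G2_rowk: assumes "1 \<le> k" "k < m"
  shows "fps_nth (rho m k * ww m) l =
    (if l + k \<ge> m \<and> (2*m) dvd (l+k-m) then tvar^((l+k-m) div 2) else 0)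
    - (if l \<ge> m + k \<and> (2*m) dvd (l-m-k) then tvar^k * tvar^((l-m-k) div 2) else 0)"
  unfolding qrow_mid[OF assms] by (rule mid_nth) (use assms in simp)

lemma not_dvd_2m: fixes a m q :: nat assumes "0 < a" "a < 2*m" shows "\<not> (2*m) dvd (2*m*q + a)"
proof
  assume "(2*m) dvd (2*m*q + a)"
  then have "(2*m) dvd a" by (simp add: dvd_add_right_iff)
  then show False using assms by (auto dest: dvd_imp_le)
qed

lemma dvd_2m: "(2*m) dvd (2*m*(q::nat))" by simp

lemma entI:
  assumes k: "1 \<le> k" "k < m" and p: "p < m"
  shows "fps_nth (rho m k * ww m) (2*m*r + m + p) = (if p = k then -(tvar^k * tvar^(m*r)) else 0)"
proof -
  define l where "l = 2*m*r + m + p"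
  have f1: "l + k \<ge> m" "l + k - m = 2*m*r + (p + k)" unfolding l_def by simp_all
  have f2: "\<not> (2*m) dvd (2*m*r + (p + k))" by (rule not_dvd_2m) (use k p in auto)
  have sec: "(if l \<ge> m + k \<and> (2*m) dvd (l-m-k) then tvar^k * tvar^((l-m-k) div 2) else 0)
     = (if p = k then tvar^k * tvar^(m*r) else 0)"
  proof (cases "p = k")
    case True
    then have "l - m - k = 2*m*r" "l \<ge> m + k" unfolding l_def by simp_all
    then show ?thesis using True by simp
  next
    case False
    show ?thesis
    proof (cases "p > k")
      case True
      then have "l - m - k = 2*m*r + (p - k)" unfolding l_def by simp
      moreover have "\<not> (2*m) dvd (2*m*r + (p - k))" by (rule not_dvd_2m) (use True p in auto)
      ultimately show ?thesis using False by simp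
    next
      case False2: False
      show ?thesis
      proof (cases "l \<ge> m + k")
        case True
        then have r: "r \<ge> 1" using False False2 unfolding l_def by (cases r) auto
        then have "l - m - k = 2*m*(r-1) + (2*m + p - k)" unfolding l_def using k
          by (cases r) (auto simp: algebra_simps)
        moreover have "\<not> (2*m) dvd (2*m*(r-1) + (2*m + p - k))" 
          by (rule not_dvd_2m) (use False False2 k p in auto)
        ultimately show ?thesis using False by simp
      qed (use False in simp)
    qed
  qed
  show ?thesis unfolding G2_rowk[OF k] l_def[symmetric] sec using f1 f2 by simp
qed

lemma entII:
  assumes k: "1 \<le> k" "k < m" and p: "p < m" and r: "r \<ge> 1"
  shows "fps_nth (rho m k * ww m) (2*m*r + p) = (if p = m - k then tvar^(m*r) else 0)"
proof -
  define l where "l = 2*m*r + p"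
  have mr: "2*m*r \<ge> 2*m" using r by simp
  have fst: "(if l + k \<ge> m \<and> (2*m) dvd (l+k-m) then tvar^((l+k-m) div 2) else 0)
     = (if p = m - k then tvar^(m*r) else 0)"
  proof (cases "p + k \<ge> m")
    case True
    have e: "l + k - m = 2*m*r + (p + k - m)" "l + k \<ge> m" unfolding l_def using True by simp_all
    show ?thesis
    proof (cases "p = m - k")
      case True
      then show ?thesis using e k by simp
    next
      case False
      have "\<not> (2*m) dvd (2*m*r + (p + k - m))" by (rule not_dvd_2m) (use True False k p in auto)
      then show ?thesis using e False by simp
    qed
  next
    case False
    have e: "l + k - m = 2*m*(r-1) + (m + p + k)" "l + k \<ge> m" unfolding l_def using False r mr
      by (cases r; simp add: algebra_simps)+
    have "\<not> (2*m) dvd (2*m*(r-1) + (m + p + k))" by (rule not_dvd_2m) (use False k p in auto)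
    moreover have "p \<noteq> m - k" using False k by auto
    ultimately show ?thesis using e by simp
  qed
  have sec: "(if l \<ge> m + k \<and> (2*m) dvd (l-m-k) then tvar^k * tvar^((l-m-k) div 2) else 0) = 0"
  proof -
    have e: "l - m - k = 2*m*(r-1) + (m + p - k)" unfolding l_def using r k p
      by (cases r) (auto simp: algebra_simps)
    have "\<not> (2*m) dvd (2*m*(r-1) + (m + p - k))" by (rule not_dvd_2m) (use k p in auto)
    then show ?thesis using e by simp
  qed
  show ?thesis unfolding G2_rowk[OF k] l_def[symmetric] fst sec by simp
qed

lemma entIII:
  assumes k: "1 \<le> k" "k < m" and p: "p < m"
  shows "fps_nth (rho m k * ww m) (2*m*r + m + 1 + p) = (if p = k - 1 then -(tvar^k * tvar^(m*r)) else 0)"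
proof -
  define l where "l = 2*m*r + m + 1 + p"
  have f1: "l + k \<ge> m" "l + k - m = 2*m*r + (1 + p + k)" unfolding l_def by simp_all
  have f2: "\<not> (2*m) dvd (2*m*r + (1 + p + k))" by (rule not_dvd_2m) (use k p in auto)
  have sec: "(if l \<ge> m + k \<and> (2*m) dvd (l-m-k) then tvar^k * tvar^((l-m-k) div 2) else 0)
     = (if p = k - 1 then tvar^k * tvar^(m*r) else 0)"
  proof (cases "p = k - 1")
    case True
    then have "l - m - k = 2*m*r" "l \<ge> m + k" unfolding l_def using k by simp_all
    then show ?thesis using True by simp
  next
    case False
    show ?thesis
    proof (cases "1 + p > k")
      case True
      then have "l - m - k = 2*m*r + (1 + p - k)" unfolding l_def by simp
      moreover have "\<not> (2*m) dvd (2*m*r + (1 + p - k))" by (rule not_dvd_2m) (use True p k in auto)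
      ultimately show ?thesis using False by simp
    next
      case False2: False
      then have lt: "1 + p < k" using False k by auto
      show ?thesis
      proof (cases "l \<ge> m + k")
        case True
        then have r: "r \<ge> 1" using lt unfolding l_def by (cases r) auto
        then have "l - m - k = 2*m*(r-1) + (2*m + 1 + p - k)" unfolding l_def using k
          by (cases r) (auto simp: algebra_simps)
        moreover have "\<not> (2*m) dvd (2*m*(r-1) + (2*m + 1 + p - k))" 
          by (rule not_dvd_2m) (use lt k p in auto)
        ultimately show ?thesis using False by simp
      qed (use False in simp)
    qed
  qed
  show ?thesis unfolding G2_rowk[OF k] l_def[symmetric] sec using f1 f2 by simp
qed

lemma entIV:
  assumes k: "1 \<le> k" "k < m" and p: "p < m"
  shows "fps_nth (rho m k * ww m) (2*m*r + 1 + p) = (if p = m - 1 - k then tvar^(m*r) else 0)"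
proof -
  define l where "l = 2*m*r + 1 + p"
  have fst: "(if l + k \<ge> m \<and> (2*m) dvd (l+k-m) then tvar^((l+k-m) div 2) else 0)
     = (if p = m - 1 - k then tvar^(m*r) else 0)"
  proof (cases "1 + p + k \<ge> m")
    case True
    have e: "l + k - m = 2*m*r + (1 + p + k - m)" "l + k \<ge> m" unfolding l_def using True by simp_all
    show ?thesis
    proof (cases "p = m - 1 - k")
      case True
      then show ?thesis using e k by simp
    next
      case False
      have "\<not> (2*m) dvd (2*m*r + (1 + p + k - m))" by (rule not_dvd_2m) (use True False k p in auto)
      then show ?thesis using e False by simp
    qed
  next
    case False
    have ne: "p \<noteq> m - 1 - k" using False k by auto
    show ?thesis
    proof (cases "l + k \<ge> m")
      case True
      then have r: "r \<ge> 1" using False unfolding l_def by (cases r) auto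
      have e: "l + k - m = 2*m*(r-1) + (m + 1 + p + k)" unfolding l_def using False r
        by (cases r) (auto simp: algebra_simps)
      have "\<not> (2*m) dvd (2*m*(r-1) + (m + 1 + p + k))" by (rule not_dvd_2m) (use False k p in auto)
      then show ?thesis using e ne by simp
    qed (use ne in simp)
  qed
  have sec: "(if l \<ge> m + k \<and> (2*m) dvd (l-m-k) then tvar^k * tvar^((l-m-k) div 2) else 0) = 0"
  proof (cases "l \<ge> m + k")
    case True
    then have r: "r \<ge> 1" using k p unfolding l_def by (cases r) auto
    have e: "l - m - k = 2*m*(r-1) + (m + 1 + p - k)" unfolding l_def using r k p
      by (cases r) (auto simp: algebra_simps)
    have "\<not> (2*m) dvd (2*m*(r-1) + (m + 1 + p - k))" by (rule not_dvd_2m) (use k p in auto)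
    then show ?thesis using e by simp
  qed simp
  show ?thesis unfolding G2_rowk[OF k] l_def[symmetric] fst sec by simp
qed

lemma entZ_even:
  assumes rho: "2 \<le> \<rho>" "\<rho> < m" and p: "p < m"
  shows "fps_nth (rho m 1 * ww m) (2*m*r + m + \<rho> + p) = 0"
proof -
  have k: "1 \<le> (1::nat)" "1 < m" using rho by auto
  define l where "l = 2*m*r + m + \<rho> + p"
  have e1: "l + 1 - m = 2*m*r + (\<rho> + p + 1)" "l + 1 \<ge> m" unfolding l_def by simp_all
  have n1: "\<not> (2*m) dvd (2*m*r + (\<rho> + p + 1))" by (rule not_dvd_2m) (use rho p in auto)
  have e2: "l - m - 1 = 2*m*r + (\<rho> + p - 1)" unfolding l_def using rho by simp
  have n2: "\<not> (2*m) dvd (2*m*r + (\<rho> + p - 1))" by (rule not_dvd_2m) (use rho p in auto)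
  show ?thesis unfolding G2_rowk[OF k] l_def[symmetric] using e1 n1 e2 n2 by simp
qed

lemma entZ_odd:
  assumes rho: "2 \<le> \<rho>" "\<rho> < m" and p: "p < m"
  shows "fps_nth (rho m (m-1) * ww m) (2*m*r + \<rho> + p) = 0"
proof -
  have k: "1 \<le> m - 1" "m - 1 < m" using rho by auto
  define l where "l = 2*m*r + \<rho> + p"
  have e1: "l + (m-1) - m = 2*m*r + (\<rho> + p - 1)" "l + (m-1) \<ge> m" unfolding l_def using rho by simp_all
  have n1: "\<not> (2*m) dvd (2*m*r + (\<rho> + p - 1))" by (rule not_dvd_2m) (use rho p in auto)
  have sec: "(if l \<ge> m + (m-1) \<and> (2*m) dvd (l-m-(m-1)) then tvar^(m-1) * tvar^((l-m-(m-1)) div 2) else 0) = 0"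
  proof (cases "l \<ge> m + (m-1)")
    case True
    then have r: "r \<ge> 1" using rho p unfolding l_def by (cases r) auto
    have e: "l - m - (m-1) = 2*m*(r-1) + (\<rho> + p + 1)" unfolding l_def using r rho
      by (cases r) (auto simp: algebra_simps)
    have "\<not> (2*m) dvd (2*m*(r-1) + (\<rho> + p + 1))" by (rule not_dvd_2m) (use rho p in auto)
    then show ?thesis using e by simp
  qed simp
  show ?thesis unfolding G2_rowk[OF k] l_def[symmetric] sec using e1 n1 by simp
qed

lemma G2_carrier: "G2 m N \<in> carrier_mat m m" by (simp add: G2_def)

lemma G2_idx: "i < m \<Longrightarrow> j < m \<Longrightarrow> G2 m N $$ (i,j) = fps_nth (rho m i * ww m) (N-m+j)"
  by (simp add: G2_def)

lemma prod_split0: "m \<ge> 1 \<Longrightarrow> (\<Prod>i<m. f i) = f 0 * (\<Prod>i<m-1. f (Suc i))"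
  by (cases m) (simp_all only: prod.lessThan_Suc_shift, simp)

lemma detI:
  assumes m: "m \<ge> 1" and N: "N = 2*m*(r+1)"
  shows "det (G2 m N) = qnum (2*r+1) (tvar^m) * (\<Prod>i<m-1. -(tvar^(i+1) * tvar^(m*r)))"
proof -
  have idx: "N - m + j = 2*m*r + m + j" for j unfolding N by (simp add: algebra_simps)
  have "det (G2 m N) = (\<Prod>i<m. G2 m N $$ (i,i))"
  proof (rule det_shape_U[OF G2_carrier])
    fix i j assume "1 \<le> i" "i < m" "j < m" "j \<noteq> i"
    then show "G2 m N $$ (i,j) = 0" by (simp add: G2_idx idx entI)
  qed
  also have "\<dots> = G2 m N $$ (0,0) * (\<Prod>i<m-1. G2 m N $$ (Suc i, Suc i))" by (rule prod_split0[OF m])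
  also have "G2 m N $$ (0,0) = qnum (2*r+1) (tvar^m)"
  proof -
    have i0: "N - m = 2*m*r + m" using idx[of 0] by simp
    have "G2 m N $$ (0,0) = fps_nth (ww m) (2*m*r)" using m
      by (simp add: G2_idx i0 G2_row0)
    also have "2*m*r = m * (2*r)" by simp
    finally have "G2 m N $$ (0,0) = fps_nth (ww m) (m * (2*r))" .
    also have "\<dots> = qnum (2*r+1) (tvar^m)"
    proof -
      have "(-1::rat poly)^(m*(2*r)) = 1" by (rule neg_one_even_power) simp
      then show ?thesis unfolding ww_mult[OF m] by simp
    qed
    finally show ?thesis .
  qed
  also have "(\<Prod>i<m-1. G2 m N $$ (Suc i, Suc i)) = (\<Prod>i<m-1. -(tvar^(i+1) * tvar^(m*r)))"
  proof (rule prod.cong)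
    fix i assume "i \<in> {..<m-1}"
    then have i: "i < m - 1" by simp
    have "G2 m N $$ (Suc i, Suc i) = fps_nth (rho m (i+1) * ww m) (N - m + (i+1))"
      using G2_idx[of "i+1" m "i+1" N] i by simp
    also have "\<dots> = fps_nth (rho m (i+1) * ww m) (2*m*r + m + (i+1))" by (simp only: idx)
    also have "\<dots> = -(tvar^(i+1) * tvar^(m*r))" by (subst entI) (use i in auto)
    finally show "G2 m N $$ (Suc i, Suc i) = -(tvar^(i+1) * tvar^(m*r))" .
  qed simp
  finally show ?thesis .
qed

lemma detII:
  assumes m: "m \<ge> 1" and N: "N = m*(2*r+1)" and r: "r \<ge> 1"
  shows "det (G2 m N) = (-1)^(m*(2*r-1)) * qnum (2*r) (tvar^m) * (-1)^((m-1)*(m-2) div 2) * (\<Prod>i<m-1. tvar^(m*r))"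
proof -
  have idx: "N - m + j = 2*m*r + j" for j unfolding N by (simp add: algebra_simps)
  have "det (G2 m N) = G2 m N $$ (0,0) * (-1)^((m-1)*(m-2) div 2) * (\<Prod>i<m-1. G2 m N $$ (i+1, m-1-i))"
  proof (rule det_shape_A[OF G2_carrier m])
    fix i j assume "1 \<le> i" "i < m" "j < m" "j \<noteq> m - i"
    then show "G2 m N $$ (i,j) = 0" using entII[of i m j r] r by (simp add: G2_idx idx)
  qed
  also have "G2 m N $$ (0,0) = (-1)^(m*(2*r-1)) * qnum (2*r) (tvar^m)"
  proof -
    have i0: "N - m = 2*m*r" using idx[of 0] by simp
    have b: "\<not> 2*m*r < m" using r by simp
    have a: "2*m*r - m = m * (2*r - 1)" by (simp add: algebra_simps)
    have "G2 m N $$ (0,0) = fps_nth (ww m) (m * (2*r-1))" using m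
      by (simp add: G2_idx i0 G2_row0 a b del: mult_2)
    also have "\<dots> = (-1)^(m*(2*r-1)) * qnum (2*r) (tvar^m)" unfolding ww_mult[OF m] using r by simp
    finally show ?thesis .
  qed
  also have "(\<Prod>i<m-1. G2 m N $$ (i+1, m-1-i)) = (\<Prod>i<m-1. tvar^(m*r))"
  proof (rule prod.cong)
    fix i assume "i \<in> {..<m-1}"
    then have i: "i < m - 1" by simp
    have "G2 m N $$ (i+1, m-1-i) = fps_nth (rho m (i+1) * ww m) (N - m + (m-1-i))"
      using G2_idx[of "i+1" m "m-1-i" N] i by simp
    also have "\<dots> = fps_nth (rho m (i+1) * ww m) (2*m*r + (m-1-i))" by (simp only: idx)
    also have "\<dots> = tvar^(m*r)" by (subst entII) (use i r in auto)
    finally show "G2 m N $$ (i+1, m-1-i) = tvar^(m*r)" .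
  qed simp
  finally show ?thesis .
qed

lemma detIII:
  assumes m: "m \<ge> 1" and N: "N = 2*m*(r+1) + 1"
  shows "det (G2 m N) = (-1)^(m-1) * (((-1)^(m*(2*r+1)) * qnum (2*r+2) (tvar^m)) * (\<Prod>i<m-1. -(tvar^(i+1) * tvar^(m*r))))"
proof -
  have idx: "N - m + j = 2*m*r + m + 1 + j" for j unfolding N by (simp add: algebra_simps)
  define G' where "G' = mat m m (\<lambda>(i,j). G2 m N $$ (i, if j = 0 then m - 1 else j - 1))"
  have G'i: "G' $$ (i,j) = fps_nth (rho m i * ww m) (2*m*r + m + 1 + (if j = 0 then m - 1 else j - 1))"
    if "i < m" "j < m" for i j
  proof -
    have "G' $$ (i,j) = fps_nth (rho m i * ww m) (N - m + (if j = 0 then m - 1 else j - 1))"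
      unfolding G'_def using that G2_idx[of i m "if j = 0 then m - 1 else j - 1" N] by auto
    also have "\<dots> = fps_nth (rho m i * ww m) (2*m*r + m + 1 + (if j = 0 then m - 1 else j - 1))"
      by (simp only: idx)
    finally show ?thesis .
  qed
  have "det (G2 m N) = (-1)^(m-1) * det G'" unfolding G'_def by (rule det_rot1[OF G2_carrier m])
  also have "det G' = (\<Prod>i<m. G' $$ (i,i))"
  proof (rule det_shape_U)
    show "G' \<in> carrier_mat m m" unfolding G'_def by simp
    fix i j assume ij: "1 \<le> i" "i < m" "j < m" "j \<noteq> i"
    show "G' $$ (i,j) = 0"
    proof (cases "j = 0")
      case True
      then show ?thesis unfolding G'i[OF ij(2,3)] using ij by (subst entIII) auto
    next
      case False
      then show ?thesis unfolding G'i[OF ij(2,3)] using ij by (subst entIII) auto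
    qed
  qed
  also have "\<dots> = G' $$ (0,0) * (\<Prod>i<m-1. G' $$ (Suc i, Suc i))" by (rule prod_split0[OF m])
  also have "G' $$ (0,0) = (-1)^(m*(2*r+1)) * qnum (2*r+2) (tvar^m)"
  proof -
    have "G' $$ (0,0) = fps_nth (rho m 0 * ww m) (2*m*r + m + 1 + (m - 1))" using G'i[of 0 0] m by simp
    also have "2*m*r + m + 1 + (m - 1) = m + m*(2*r+1)" using m by (simp add: algebra_simps)
    also have "fps_nth (rho m 0 * ww m) (m + m*(2*r+1)) = fps_nth (ww m) (m*(2*r+1))"
      unfolding G2_row0 by simp
    also have "\<dots> = (-1)^(m*(2*r+1)) * qnum (2*r+2) (tvar^m)" unfolding ww_mult[OF m] by simp
    finally show ?thesis .
  qed
  also have "(\<Prod>i<m-1. G' $$ (Suc i, Suc i)) = (\<Prod>i<m-1. -(tvar^(i+1) * tvar^(m*r)))"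
  proof (rule prod.cong)
    fix i assume "i \<in> {..<m-1}"
    then have i: "i < m - 1" by simp
    have "G' $$ (Suc i, Suc i) = fps_nth (rho m (i+1) * ww m) (2*m*r + m + 1 + i)"
      using G'i[of "Suc i" "Suc i"] i by simp
    also have "\<dots> = -(tvar^(i+1) * tvar^(m*r))" by (subst entIII) (use i in auto)
    finally show "G' $$ (Suc i, Suc i) = -(tvar^(i+1) * tvar^(m*r))" .
  qed simp
  finally show ?thesis .
qed

lemma detIV:
  assumes m: "m \<ge> 1" and N: "N = m*(2*r+1) + 1"
  shows "det (G2 m N) = (-1)^(m-1) * (qnum (2*r+1) (tvar^m) * (-1)^((m-1)*(m-2) div 2) * (\<Prod>i<m-1. tvar^(m*r)))"
proof -
  have idx: "N - m + j = 2*m*r + 1 + j" for j unfolding N by (simp add: algebra_simps)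
  define G' where "G' = mat m m (\<lambda>(i,j). G2 m N $$ (i, if j = 0 then m - 1 else j - 1))"
  have G'i: "G' $$ (i,j) = fps_nth (rho m i * ww m) (2*m*r + 1 + (if j = 0 then m - 1 else j - 1))"
    if "i < m" "j < m" for i j
  proof -
    have "G' $$ (i,j) = fps_nth (rho m i * ww m) (N - m + (if j = 0 then m - 1 else j - 1))"
      unfolding G'_def using that G2_idx[of i m "if j = 0 then m - 1 else j - 1" N] by auto
    also have "\<dots> = fps_nth (rho m i * ww m) (2*m*r + 1 + (if j = 0 then m - 1 else j - 1))"
      by (simp only: idx)
    finally show ?thesis .
  qed
  have "det (G2 m N) = (-1)^(m-1) * det G'" unfolding G'_def by (rule det_rot1[OF G2_carrier m])
  also have "det G' = G' $$ (0,0) * (-1)^((m-1)*(m-2) div 2) * (\<Prod>i<m-1. G' $$ (i+1, m-1-i))"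
  proof (rule det_shape_A[OF _ m])
    show "G' \<in> carrier_mat m m" unfolding G'_def by simp
    fix i j assume ij: "1 \<le> i" "i < m" "j < m" "j \<noteq> m - i"
    show "G' $$ (i,j) = 0"
    proof (cases "j = 0")
      case True
      then show ?thesis unfolding G'i[OF ij(2,3)] using ij by (subst entIV) auto
    next
      case False
      then show ?thesis unfolding G'i[OF ij(2,3)] using ij by (subst entIV) auto
    qed
  qed
  also have "G' $$ (0,0) = qnum (2*r+1) (tvar^m)"
  proof -
    have "G' $$ (0,0) = fps_nth (rho m 0 * ww m) (2*m*r + 1 + (m - 1))" using G'i[of 0 0] m by simp
    also have "2*m*r + 1 + (m - 1) = m + m*(2*r)" using m by (simp add: algebra_simps)
    also have "fps_nth (rho m 0 * ww m) (m + m*(2*r)) = fps_nth (ww m) (m*(2*r))"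
      unfolding G2_row0 by simp
    also have "\<dots> = qnum (2*r+1) (tvar^m)"
    proof -
      have "(-1::rat poly)^(m*(2*r)) = 1" by (rule neg_one_even_power) simp
      then show ?thesis unfolding ww_mult[OF m] by simp
    qed
    finally show ?thesis .
  qed
  also have "(\<Prod>i<m-1. G' $$ (i+1, m-1-i)) = (\<Prod>i<m-1. tvar^(m*r))"
  proof (rule prod.cong)
    fix i assume "i \<in> {..<m-1}"
    then have i: "i < m - 1" by simp
    have "G' $$ (i+1, m-1-i) = fps_nth (rho m (i+1) * ww m) (2*m*r + 1 + (m-2-i))"
      using G'i[of "i+1" "m-1-i"] i by (simp add: numeral_2_eq_2)
    also have "\<dots> = tvar^(m*r)" by (subst entIV) (use i in auto)
    finally show "G' $$ (i+1, m-1-i) = tvar^(m*r)" .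
  qed simp
  finally show ?thesis .
qed

lemma detZ:
  assumes m: "m \<ge> 1" and N: "N = m*n + \<rho>" and n: "n \<ge> 1" and rho: "2 \<le> \<rho>" "\<rho> < m"
  shows "det (G2 m N) = 0"
proof (cases "even n")
  case True
  then obtain r where r: "n = 2*(r+1)" using n by (metis evenE Suc_eq_plus1 not0_implies_Suc not_one_le_zero mult_0_right)
  have idx: "N - m + j = 2*m*r + m + \<rho> + j" for j unfolding N r by (simp add: algebra_simps)
  show ?thesis
  proof (rule det_zero_row[OF G2_carrier, of 1])
    show "1 < m" using rho by simp
    fix j assume j: "j < m"
    have "G2 m N $$ (1, j) = fps_nth (rho m 1 * ww m) (N - m + j)" using G2_idx[of 1 m j N] j rho by simp
    also have "\<dots> = fps_nth (rho m 1 * ww m) (2*m*r + m + \<rho> + j)" by (simp only: idx)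
    also have "\<dots> = 0" by (rule entZ_even[OF rho j])
    finally show "G2 m N $$ (1, j) = 0" .
  qed
next
  case False
  then obtain r where r: "n = 2*r+1" by (metis oddE)
  have idx: "N - m + j = 2*m*r + \<rho> + j" for j unfolding N r by (simp add: algebra_simps)
  show ?thesis
  proof (rule det_zero_row[OF G2_carrier, of "m-1"])
    show "m - 1 < m" using rho by simp
    fix j assume j: "j < m"
    have "G2 m N $$ (m-1, j) = fps_nth (rho m (m-1) * ww m) (N - m + j)" using G2_idx[of "m-1" m j N] j rho by simp
    also have "\<dots> = fps_nth (rho m (m-1) * ww m) (2*m*r + \<rho> + j)" by (simp only: idx)
    also have "\<dots> = 0" by (rule entZ_odd[OF rho j])
    finally show "G2 m N $$ (m-1, j) = 0" .
  qed
qed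




definition T :: "nat \<Rightarrow> nat" where "T x = x * (x - 1) div 2"

lemma even_T: "even (x * (x - 1 :: nat))"
  by (cases x) auto

lemma T2: "2 * T x = x * (x - 1)"
  unfolding T_def using even_T[of x] by simp

lemma T_Suc: "T (Suc x) = T x + x"
proof -
  have "2 * T (Suc x) = 2 * (T x + x)" unfolding distrib_left T2 by (cases x) (simp_all add: algebra_simps)
  then show ?thesis by simp
qed

lemma prodP1: "(\<Prod>i<k. -(x^(i+1) * y)) = (-1)^k * x^(T (k+1)) * (y^k :: rat poly)"
proof (induction k)
  case 0 then show ?case by (simp add: T_def)
next
  case (Suc k)
  have "(\<Prod>i<Suc k. -(x^(i+1) * y)) = ((-1)^k * x^(T (k+1)) * y^k) * (-(x^(k+1) * y))"
    using Suc by simp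
  also have "\<dots> = (-1)^(Suc k) * x^(T (k+1) + (k+1)) * y^(Suc k)" by (simp add: power_add algebra_simps)
  also have "T (k+1) + (k+1) = T (Suc k + 1)" using T_Suc[of "k+1"] by simp
  finally show ?case .
qed

lemma sgn_eq: "even a = even b \<Longrightarrow> (-1::rat poly)^a = (-1)^b"
  by (simp add: minus_one_power_iff)

lemma H_Qm: assumes m: "m \<ge> 1" shows "hankelH m N = det (Qm m N)"
  unfolding hankelH_Fm det_Fm[OF m] det_Cm ..

lemma H_main: assumes m: "m \<ge> 1" and mN: "m \<le> N"
  shows "hankelH m N = (-1)^(m*(N-m)) * det (G2 m N) * tvar^(T (N-m))"
  unfolding H_Qm[OF m] Qm_bottom[OF m mN] T_def ..

lemma caseI:
  assumes m: "m \<ge> 1" and n: "n = 2*(r+1)"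
  shows "hankelH m (m*n) = - ((-1) ^ (n * m * (m - 1) div 2) * tvar ^ (m * (n - 1) * (m * n - 2) div 2)
              * qnum (n - 1) (tvar ^ m))"
proof -
  obtain s where s: "m = s + 1" using m by (intro that[of "m - 1"]) simp
  define N where "N = m*n"
  have N: "N = 2*m*(r+1)" unfolding N_def n by simp
  have mN: "m \<le> N" unfolding N using m by simp
  have NM: "N - m = m*(2*r+1)" unfolding N by (simp add: algebra_simps)
  have H: "hankelH m N = (-1)^(m*(N-m)) * (qnum (2*r+1) (tvar^m) * ((-1)^(m-1) * tvar^(T m) * (tvar^(m*r))^(m-1))) * tvar^(T (N-m))"
    unfolding H_main[OF m mN] detI[OF m N] prodP1 using m by simp
  have sg: "(-1::rat poly)^(m*(N-m)) * (-1)^(m-1) = - ((-1) ^ (n * m * (m - 1) div 2))"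
  proof -
    have a0: "n * m * (m - 1) = 2 * ((r+1) * (m * (m - 1)))" unfolding n by (simp only: ac_simps)
    have a: "n * m * (m - 1) div 2 = (r+1) * (m * (m - 1))" unfolding a0 by simp
    have "odd (m*(N-m) + (m-1))" unfolding NM unfolding s by (simp add: algebra_simps)
    then have "(-1::rat poly)^(m*(N-m) + (m-1)) = -1" by simp
    moreover have "even (n * m * (m - 1) div 2)" unfolding a using even_T[of m] by simp
    ultimately show ?thesis by (simp add: power_add)
  qed
  have ex: "T m + m*r*(m-1) + T (N-m) = m * (n - 1) * (m * n - 2) div 2"
  proof -
    have e1: "m * n - 2 = 2 * (s*(r+1) + r)" unfolding s n by (simp add: algebra_simps)
    have e2': "m * (n - 1) * (m * n - 2) = 2 * (m * (2*r+1) * (s*(r+1) + r))" unfolding e1 unfolding n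
      by (simp add: ac_simps)
    have e2: "m * (n - 1) * (m * n - 2) div 2 = m * (2*r+1) * (s*(r+1) + r)" unfolding e2' by simp
    have f: "(s+1)*(2*r+1) - 1 = s*(2*r+1) + 2*r" by (simp add: algebra_simps)
    have t1: "2 * T m = (s+1)*s" unfolding T2 s by simp
    have t3: "2 * T (N-m) = ((s+1)*(2*r+1))*(s*(2*r+1) + 2*r)" unfolding T2 NM unfolding s f ..
    have t2: "m*r*(m-1) = (s+1)*r*s" unfolding s by simp
    have "2 * (T m + m*r*(m-1) + T (N-m)) = (s+1)*s + 2*((s+1)*r*s) + ((s+1)*(2*r+1))*(s*(2*r+1) + 2*r)"
      unfolding distrib_left t1 t2 t3 ..
    also have "\<dots> = 2 * (m * (2*r+1) * (s*(r+1) + r))" unfolding s by (simp add: algebra_simps)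
    finally show ?thesis unfolding e2 by simp
  qed
  have "hankelH m N = ((-1)^(m*(N-m)) * (-1)^(m-1)) * (tvar^(T m) * tvar^(m*r*(m-1)) * tvar^(T (N-m))) * qnum (2*r+1) (tvar^m)"
    unfolding H power_mult[symmetric] by (simp only: ac_simps)
  also have "tvar^(T m) * tvar^(m*r*(m-1)) * tvar^(T (N-m)) = tvar^(T m + m*r*(m-1) + T (N-m))"
    by (simp only: power_add)
  also have "((-1)^(m*(N-m)) * (-1)^(m-1)) * tvar^(T m + m*r*(m-1) + T (N-m)) * qnum (2*r+1) (tvar^m)
      = - ((-1) ^ (n * m * (m - 1) div 2) * tvar ^ (m * (n - 1) * (m * n - 2) div 2)
              * qnum (n - 1) (tvar ^ m))"
    unfolding sg ex using n by simp
  finally show ?thesis unfolding N_def .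
qed

lemma sgn_neg: "odd (a + b) \<Longrightarrow> (-1::rat poly)^a = - ((-1)^b)"
  by (auto simp: minus_one_power_iff)

lemma sgn_pos: "even (a + b) \<Longrightarrow> (-1::rat poly)^a = (-1)^b"
  by (auto simp: minus_one_power_iff)

lemma T_m1: "T (m - 1) = (m - 1) * (m - 2) div 2"
  unfolding T_def by (simp add: numeral_2_eq_2)

lemma caseII:
  assumes m: "m \<ge> 1" and n: "n = 2*r+1" and r: "r \<ge> 1"
  shows "hankelH m (m*n) = - ((-1) ^ (n * m * (m - 1) div 2) * tvar ^ (m * (n - 1) * (m * n - 2) div 2)
              * qnum (n - 1) (tvar ^ m))"
proof -
  obtain s where s: "m = s + 1" using m by (intro that[of "m - 1"]) simp
  obtain q where q: "r = q + 1" using r by (intro that[of "r - 1"]) simp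
  define N where "N = m*n"
  have N: "N = m*(2*r+1)" unfolding N_def n by simp
  have mN: "m \<le> N" unfolding N using m by simp
  have NM: "N - m = 2*m*r" unfolding N by (simp add: algebra_simps)
  have H: "hankelH m N = (-1)^(m*(N-m)) * ((-1)^(m*(2*r-1)) * qnum (2*r) (tvar^m) * (-1)^(T (m-1)) * (tvar^(m*r))^(m-1)) * tvar^(T (N-m))"
    unfolding H_main[OF m mN] detII[OF m N r] T_m1 by simp
  have a0: "n * m * (m - 1) = 2 * (n * T m)"
  proof -
    have "2 * (n * T m) = n * (2 * T m)" by simp
    also have "\<dots> = n * (m * (m - 1))" by (simp only: T2)
    finally have h: "2 * (n * T m) = n * (m * (m - 1))" .
    show ?thesis using h[symmetric] by (simp only: mult.assoc)
  qed
  have a: "n * m * (m - 1) div 2 = n * T m" unfolding a0 by simp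
  have sg: "(-1::rat poly)^(m*(N-m)) * (-1)^(m*(2*r-1)) * (-1)^(T (m-1)) = - ((-1) ^ (n * m * (m - 1) div 2))"
  proof -
    have "odd ((m*(N-m) + m*(2*r-1) + T (m-1)) + n * T m)"
      unfolding NM unfolding n q unfolding s
      by (simp add: T_Suc algebra_simps)
    then show ?thesis unfolding a by (simp add: power_add[symmetric] sgn_neg)
  qed
  have ex: "m*r*(m-1) + T (N-m) = m * (n - 1) * (m * n - 2) div 2"
  proof -
    have e1: "m * n - 2 = 2*q + 1 + s*(2*q+3)" unfolding s n q by (simp add: algebra_simps)
    have e2': "m * (n - 1) * (m * n - 2) = 2 * (m * r * (2*q + 1 + s*(2*q+3)))" unfolding e1 unfolding n
      by (simp add: ac_simps)
    have e2: "m * (n - 1) * (m * n - 2) div 2 = m * r * (2*q + 1 + s*(2*q+3))" unfolding e2' by simp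
    have f: "2*(s+1)*(q+1) - 1 = 2*q + 1 + 2*s*(q+1)" by (simp add: algebra_simps)
    have t3: "2 * T (N-m) = (2*(s+1)*(q+1))*(2*q + 1 + 2*s*(q+1))" unfolding T2 NM unfolding s q f ..
    have t2: "m*r*(m-1) = (s+1)*(q+1)*s" unfolding s q by simp
    have "2 * (m*r*(m-1) + T (N-m)) = 2*((s+1)*(q+1)*s) + (2*(s+1)*(q+1))*(2*q + 1 + 2*s*(q+1))"
      unfolding distrib_left t2 t3 ..
    also have "\<dots> = 2 * (m * r * (2*q + 1 + s*(2*q+3)))" unfolding s q by (simp add: algebra_simps)
    finally show ?thesis unfolding e2 by simp
  qed
  have "hankelH m N = ((-1)^(m*(N-m)) * (-1)^(m*(2*r-1)) * (-1)^(T (m-1))) * (tvar^(m*r*(m-1)) * tvar^(T (N-m))) * qnum (2*r) (tvar^m)"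
    unfolding H power_mult[symmetric] by (simp only: ac_simps)
  also have "tvar^(m*r*(m-1)) * tvar^(T (N-m)) = tvar^(m*r*(m-1) + T (N-m))"
    by (simp only: power_add)
  also have "((-1)^(m*(N-m)) * (-1)^(m*(2*r-1)) * (-1)^(T (m-1))) * tvar^(m*r*(m-1) + T (N-m)) * qnum (2*r) (tvar^m)
      = - ((-1) ^ (n * m * (m - 1) div 2) * tvar ^ (m * (n - 1) * (m * n - 2) div 2)
              * qnum (n - 1) (tvar ^ m))"
    unfolding sg ex using n by simp
  finally show ?thesis unfolding N_def .
qed

lemma caseIII:
  assumes m: "m \<ge> 1" and n: "n = 2*(r+1)"
  shows "hankelH m (m*n+1) = (-1) ^ m * (-1) ^ (n * m * (m - 1) div 2) * tvar ^ (m\<^sup>2 * n * (n - 1) div 2)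
              * qnum n (tvar ^ m)"
proof -
  obtain s where s: "m = s + 1" using m by (intro that[of "m - 1"]) simp
  define N where "N = m*n+1"
  have N: "N = 2*m*(r+1) + 1" unfolding N_def n by simp
  have mN: "m \<le> N" unfolding N using m by simp
  have NM: "N - m = m*(2*r+1) + 1" unfolding N by (simp add: algebra_simps)
  have H: "hankelH m N = (-1)^(m*(N-m)) * ((-1)^(m-1) * (((-1)^(m*(2*r+1)) * qnum (2*r+2) (tvar^m)) * ((-1)^(m-1) * tvar^(T m) * (tvar^(m*r))^(m-1)))) * tvar^(T (N-m))"
    unfolding H_main[OF m mN] detIII[OF m N] prodP1 using m by simp
  have a0: "n * m * (m - 1) = 2 * (n * T m)"
  proof -
    have "2 * (n * T m) = n * (2 * T m)" by simp
    also have "\<dots> = n * (m * (m - 1))" by (simp only: T2)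
    finally have h: "2 * (n * T m) = n * (m * (m - 1))" .
    show ?thesis using h[symmetric] by (simp only: mult.assoc)
  qed
  have a: "n * m * (m - 1) div 2 = n * T m" unfolding a0 by simp
  have sg: "(-1::rat poly)^(m*(N-m)) * (-1)^(m-1) * (-1)^(m*(2*r+1)) * (-1)^(m-1) = (-1) ^ m * (-1) ^ (n * m * (m - 1) div 2)"
  proof -
    have ev: "even ((m*(N-m) + (m-1) + m*(2*r+1) + (m-1)) + (m + n * T m))"
      unfolding NM unfolding n unfolding s by (simp add: T_Suc algebra_simps)
    have "(-1::rat poly)^(m*(N-m) + (m-1) + m*(2*r+1) + (m-1)) = (-1)^(m + n * T m)"
      by (rule sgn_pos[OF ev])
    then show ?thesis unfolding a by (simp only: power_add)
  qed
  have ex: "T m + m*r*(m-1) + T (N-m) = m\<^sup>2 * n * (n - 1) div 2"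
  proof -
    have e2': "m\<^sup>2 * n * (n - 1) = 2 * (m\<^sup>2 * (r+1) * (2*r+1))" unfolding n
      by (simp add: algebra_simps power2_eq_square)
    have e2: "m\<^sup>2 * n * (n - 1) div 2 = m\<^sup>2 * (r+1) * (2*r+1)" unfolding e2' by simp
    have f: "(s+1)*(2*r+1) + 1 - 1 = (s+1)*(2*r+1)" by simp
    have t1: "2 * T m = (s+1)*s" unfolding T2 s by simp
    have t3: "2 * T (N-m) = ((s+1)*(2*r+1) + 1)*((s+1)*(2*r+1))" unfolding T2 NM unfolding s f ..
    have t2: "m*r*(m-1) = (s+1)*r*s" unfolding s by simp
    have "2 * (T m + m*r*(m-1) + T (N-m)) = (s+1)*s + 2*((s+1)*r*s) + ((s+1)*(2*r+1) + 1)*((s+1)*(2*r+1))"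
      unfolding distrib_left t1 t2 t3 ..
    also have "\<dots> = 2 * (m\<^sup>2 * (r+1) * (2*r+1))" unfolding s by (simp add: algebra_simps power2_eq_square)
    finally show ?thesis unfolding e2 by simp
  qed
  have "hankelH m N = ((-1)^(m*(N-m)) * (-1)^(m-1) * (-1)^(m*(2*r+1)) * (-1)^(m-1)) * (tvar^(T m) * tvar^(m*r*(m-1)) * tvar^(T (N-m))) * qnum (2*r+2) (tvar^m)"
    unfolding H power_mult[symmetric] by (simp only: ac_simps)
  also have "tvar^(T m) * tvar^(m*r*(m-1)) * tvar^(T (N-m)) = tvar^(T m + m*r*(m-1) + T (N-m))"
    by (simp only: power_add)
  also have "((-1)^(m*(N-m)) * (-1)^(m-1) * (-1)^(m*(2*r+1)) * (-1)^(m-1)) * tvar^(T m + m*r*(m-1) + T (N-m)) * qnum (2*r+2) (tvar^m)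
      = (-1) ^ m * (-1) ^ (n * m * (m - 1) div 2) * tvar ^ (m\<^sup>2 * n * (n - 1) div 2) * qnum n (tvar ^ m)"
    unfolding sg ex using n by simp
  finally show ?thesis unfolding N_def .
qed

lemma caseIV:
  assumes m: "m \<ge> 1" and n: "n = 2*r+1"
  shows "hankelH m (m*n+1) = (-1) ^ m * (-1) ^ (n * m * (m - 1) div 2) * tvar ^ (m\<^sup>2 * n * (n - 1) div 2)
              * qnum n (tvar ^ m)"
proof -
  obtain s where s: "m = s + 1" using m by (intro that[of "m - 1"]) simp
  define N where "N = m*n+1"
  have N: "N = m*(2*r+1) + 1" unfolding N_def n by simp
  have mN: "m \<le> N" unfolding N using m by simp
  have NM: "N - m = 2*m*r + 1" unfolding N by (simp add: algebra_simps)
  have H: "hankelH m N = (-1)^(m*(N-m)) * ((-1)^(m-1) * (qnum (2*r+1) (tvar^m) * (-1)^(T (m-1)) * (tvar^(m*r))^(m-1))) * tvar^(T (N-m))"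
    unfolding H_main[OF m mN] detIV[OF m N] T_m1 by simp
  have a0: "n * m * (m - 1) = 2 * (n * T m)"
  proof -
    have "2 * (n * T m) = n * (2 * T m)" by simp
    also have "\<dots> = n * (m * (m - 1))" by (simp only: T2)
    finally have h: "2 * (n * T m) = n * (m * (m - 1))" .
    show ?thesis using h[symmetric] by (simp only: mult.assoc)
  qed
  have a: "n * m * (m - 1) div 2 = n * T m" unfolding a0 by simp
  have sg: "(-1::rat poly)^(m*(N-m)) * (-1)^(m-1) * (-1)^(T (m-1)) = (-1) ^ m * (-1) ^ (n * m * (m - 1) div 2)"
  proof -
    have ev: "even ((m*(N-m) + (m-1) + T (m-1)) + (m + n * T m))"
      unfolding NM unfolding n unfolding s by (simp add: T_Suc algebra_simps)
    have "(-1::rat poly)^(m*(N-m) + (m-1) + T (m-1)) = (-1)^(m + n * T m)"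
      by (rule sgn_pos[OF ev])
    then show ?thesis unfolding a by (simp only: power_add)
  qed
  have ex: "m*r*(m-1) + T (N-m) = m\<^sup>2 * n * (n - 1) div 2"
  proof -
    have e2': "m\<^sup>2 * n * (n - 1) = 2 * (m\<^sup>2 * r * (2*r+1))" unfolding n
      by (simp add: algebra_simps power2_eq_square)
    have e2: "m\<^sup>2 * n * (n - 1) div 2 = m\<^sup>2 * r * (2*r+1)" unfolding e2' by simp
    have f: "2*(s+1)*r + 1 - 1 = 2*(s+1)*r" by simp
    have t3: "2 * T (N-m) = (2*(s+1)*r + 1)*(2*(s+1)*r)" unfolding T2 NM unfolding s f ..
    have t2: "m*r*(m-1) = (s+1)*r*s" unfolding s by simp
    have "2 * (m*r*(m-1) + T (N-m)) = 2*((s+1)*r*s) + (2*(s+1)*r + 1)*(2*(s+1)*r)"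
      unfolding distrib_left t2 t3 ..
    also have "\<dots> = 2 * (m\<^sup>2 * r * (2*r+1))" unfolding s by (simp add: algebra_simps power2_eq_square)
    finally show ?thesis unfolding e2 by simp
  qed
  have "hankelH m N = ((-1)^(m*(N-m)) * (-1)^(m-1) * (-1)^(T (m-1))) * (tvar^(m*r*(m-1)) * tvar^(T (N-m))) * qnum (2*r+1) (tvar^m)"
    unfolding H power_mult[symmetric] by (simp only: ac_simps)
  also have "tvar^(m*r*(m-1)) * tvar^(T (N-m)) = tvar^(m*r*(m-1) + T (N-m))"
    by (simp only: power_add)
  also have "((-1)^(m*(N-m)) * (-1)^(m-1) * (-1)^(T (m-1))) * tvar^(m*r*(m-1) + T (N-m)) * qnum (2*r+1) (tvar^m)
      = (-1) ^ m * (-1) ^ (n * m * (m - 1) div 2) * tvar ^ (m\<^sup>2 * n * (n - 1) div 2) * qnum n (tvar ^ m)"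
    unfolding sg ex using n by simp
  finally show ?thesis unfolding N_def .
qed

lemma H_small: assumes m: "m \<ge> 1" and N: "1 \<le> N" "N \<le> m" shows "hankelH m N = 0"
  unfolding H_Qm[OF m] using Qm_small[OF m N] .

lemma H_zero: assumes m: "m \<ge> 1" and mN: "m < N" and rho: "N mod m \<ge> 2"
  shows "hankelH m N = 0"
proof -
  define n where "n = N div m"
  define \<rho> where "\<rho> = N mod m"
  have N: "N = m*n + \<rho>" unfolding n_def \<rho>_def by simp
  have "0 < n" unfolding n_def using mN m by (simp add: div_greater_zero_iff)
  then have n: "n \<ge> 1" by simp
  have r: "\<rho> < m" unfolding \<rho>_def using m by simp
  have "det (G2 m N) = 0" by (rule detZ[OF m N n]) (use rho r in \<open>auto simp: \<rho>_def\<close>)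
  then show ?thesis unfolding H_main[OF m less_imp_le[OF mN]] by simp
qed

theorem theorem1p4_dev:
  fixes m :: nat
  assumes "m \<ge> 1"
  shows "hankelH m 0 = 1
    \<and> (\<forall>n\<ge>1. hankelH m (m * n) =
           - ((-1) ^ (n * m * (m - 1) div 2) * tvar ^ (m * (n - 1) * (m * n - 2) div 2)
              * qnum (n - 1) (tvar ^ m)))
    \<and> (\<forall>n. hankelH m (m * n + 1) =
           (-1) ^ m * (-1) ^ (n * m * (m - 1) div 2) * tvar ^ (m\<^sup>2 * n * (n - 1) div 2)
              * qnum n (tvar ^ m))
    \<and> (\<forall>N. N \<noteq> 0 \<and> (\<forall>n\<ge>1. N \<noteq> m * n) \<and> (\<forall>n. N \<noteq> m * n + 1)
           \<longrightarrow> hankelH m N = 0)"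
proof (intro conjI allI impI)
  note m = assms
  show "hankelH m 0 = 1" unfolding hankelH_def by (subst det_dim_zero) auto
next
  fix n :: nat assume n: "n \<ge> 1"
  show "hankelH m (m * n) = - ((-1) ^ (n * m * (m - 1) div 2) * tvar ^ (m * (n - 1) * (m * n - 2) div 2)
              * qnum (n - 1) (tvar ^ m))"
  proof (cases "n = 1")
    case True
    then show ?thesis using H_small[OF assms, of m] assms by (simp add: qnum_def)
  next
    case False
    show ?thesis
    proof (cases "even n")
      case True
      then obtain r where "n = 2*(r+1)" using n False
        by (intro that[of "n div 2 - 1"]) (auto elim!: evenE)
      then show ?thesis by (rule caseI[OF assms])
    next
      case odd: False
      then obtain r where r: "n = 2*r+1" by (metis oddE)
      then have "r \<ge> 1" using False by simp
      then show ?thesis by (rule caseII[OF assms r])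
    qed
  qed
next
  fix n :: nat
  show "hankelH m (m * n + 1) = (-1) ^ m * (-1) ^ (n * m * (m - 1) div 2) * tvar ^ (m\<^sup>2 * n * (n - 1) div 2)
              * qnum n (tvar ^ m)"
  proof (cases "n = 0")
    case True
    then show ?thesis using H_small[OF assms, of 1] assms by (simp add: qnum_def)
  next
    case False
    show ?thesis
    proof (cases "even n")
      case True
      then obtain r where "n = 2*(r+1)" using False
        by (intro that[of "n div 2 - 1"]) (auto elim!: evenE)
      then show ?thesis by (rule caseIII[OF assms])
    next
      case odd: False
      then obtain r where r: "n = 2*r+1" by (metis oddE)
      then show ?thesis by (rule caseIV[OF assms])
    qed
  qed
next
  fix N :: nat
  assume h: "N \<noteq> 0 \<and> (\<forall>n\<ge>1. N \<noteq> m * n) \<and> (\<forall>n. N \<noteq> m * n + 1)"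
  show "hankelH m N = 0"
  proof (cases "N \<le> m")
    case True
    then show ?thesis using H_small[OF assms, of N] h by simp
  next
    case False
    have Nd: "N = m * (N div m) + N mod m" by simp
    have "0 < N div m" using False assms by (simp add: div_greater_zero_iff)
    then have d1: "N div m \<ge> 1" by simp
    have "N mod m \<noteq> 0"
    proof
      assume "N mod m = 0"
      then have "N = m * (N div m)" using Nd by simp
      then show False using h d1 by blast
    qed
    moreover have "N mod m \<noteq> 1"
    proof
      assume "N mod m = 1"
      then have "N = m * (N div m) + 1" using Nd by simp
      then show False using h by blast
    qed
    ultimately have "N mod m \<ge> 2" by simp
    then show ?thesis using H_zero[OF assms] False by simp
  qed
qed


theorem theorem1p4:
  fixes m :: nat
  assumes "m \<ge> 1"
  shows "hankelH m 0 = 1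
    \<and> (\<forall>n\<ge>1. hankelH m (m * n) =
           - ((-1) ^ (n * m * (m - 1) div 2) * tvar ^ (m * (n - 1) * (m * n - 2) div 2)
              * qnum (n - 1) (tvar ^ m)))
    \<and> (\<forall>n. hankelH m (m * n + 1) =
           (-1) ^ m * (-1) ^ (n * m * (m - 1) div 2) * tvar ^ (m\<^sup>2 * n * (n - 1) div 2)
              * qnum n (tvar ^ m))
    \<and> (\<forall>N. N \<noteq> 0 \<and> (\<forall>n\<ge>1. N \<noteq> m * n) \<and> (\<forall>n. N \<noteq> m * n + 1)
           \<longrightarrow> hankelH m N = 0)"
  using theorem1p4_dev[OF assms] .

end
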